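(* Let $n \in \mathbb{Z}_{\geq 0}$, $k \in \mathbb{Z}_{\geq 1}$, $m_1,\dots,m_k\in\mathbb{Z}_{\geq 2}$, and let \[ G = \langle e_1, \ldots, e_k, h_1, \ldots, h_{2n} \mid e_1^{m_1} = \cdots = e_k^{m_k} = 1 \rangle , \] and assume that $G$ is neither cyclic nor isomorphic to $\mathbb{Z}_2\ast\mathbb{Z}_2$. Let $F$ be the subgroup of $G$ generated by $S_1\cup S_2$ (defined below). Then $F$ is a free group and $[G:F]=m_1\cdots m_k$.
   Context: Notation: $[l]=\{1,\dots,l\}$ for $l\in\mathbb{Z}_{>0}$; $[g,h]=ghg^{-1}h^{-1}$ and ${}^{g}h = ghg^{-1}$. For $2\le t\le k$ set $\Lambda_t = \big(([m_1]\times\cdots\times[m_{t-1}])\setminus\{(m_1,\dots,m_{t-1})\}\big)\times[m_t-1]$ and $\Xi_t=[m_{t+1}]\times\cdots\times[m_k]$, where $\Xi_k=\{0\}$. For $\lambda=(u_1,\dots,u_t)\in\Lambda_t$ and $\xi=(u_{t+1},\dots,u_k)\in\Xi_t$ put $f_\lambda=[e_t^{u_t}, e_{t-1}^{u_{t-1}}\cdots e_1^{u_1}]$ and $g_\xi = e_k^{u_k}\cdots e_{t+1}^{u_{t+1}}$ (with $g_\xi=1$ for $\xi\in\Xi_k$). Set $S_1=\{{}^{g_\xi}f_\lambda \mid 2\le t\le k,\ \lambda\in\Lambda_t,\ \xi\in\Xi_t\}$ and $S_2=\{{}^{e_k^{i_k}\cdots e_1^{i_1}}h_l \mid l\in[2n],\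 (i_1,\dots,i_k)\in[m_1]\times\cdots\times[m_k]\}$. *)

theory Defs
  imports "HOL-Algebra.Coset" "HOL-Algebra.Elementary_Groups"
begin

text \<open>A letter is a pair (x, b): b = False means x, b = True means x inverse.\<close>

definition inv_letter :: "'g \<times> bool \<Rightarrow> 'g \<times> bool" where
  "inv_letter a = (fst a, \<not> snd a)"

fun cons_red :: "'g \<times> bool \<Rightarrow> ('g \<times> bool) list \<Rightarrow> ('g \<times> bool) list" where
  "cons_red a [] = [a]"
| "cons_red a (b # w) = (if b = inv_letter a then w else a # b # w)"

definition reduce :: "('g \<times> bool) list \<Rightarrow> ('g \<times> bool) list" where
  "reduce w = foldr cons_red w []"

definition reduced :: "('g \<times> bool) list \<Rightarrow> bool" where
  "reduced w \<longleftrightarrow> (\<forall>i. Suc i < length w \<longrightarrow> w ! Suc i \<noteq> inv_letter (w ! i))"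

definition word_inv :: "('g \<times> bool) list \<Rightarrow> ('g \<times> bool) list" where
  "word_inv w = rev (map inv_letter w)"

definition free_grp :: "'g set \<Rightarrow> ('g \<times> bool) list monoid" where
  "free_grp A = \<lparr>carrier = {w. set (map fst w) \<subseteq> A \<and> reduced w},
                 mult = (\<lambda>u v. reduce (u @ v)), one = []\<rparr>"

definition is_free_grp :: "('a, 'b) monoid_scheme \<Rightarrow> bool" where
  "is_free_grp Hg \<longleftrightarrow> (\<exists>B :: 'a set. Hg \<cong> free_grp B)"

text \<open>Generators: Inl i is e_i (1 \<le> i \<le> k), Inr l is h_l (1 \<le> l \<le> 2n).\<close>
definition gens :: "nat \<Rightarrow> nat \<Rightarrow> (nat + nat) set" where
  "gens k n = Inl ` {1..k} \<union> Inr ` {1..2*n}"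

definition relators :: "nat \<Rightarrow> (nat \<Rightarrow> nat) \<Rightarrow> ((nat + nat) \<times> bool) list set" where
  "relators k m = {replicate (m i) (Inl i, False) | i. i \<in> {1..k}}"

definition rel_closure :: "nat \<Rightarrow> nat \<Rightarrow> (nat \<Rightarrow> nat) \<Rightarrow> ((nat + nat) \<times> bool) list set" where
  "rel_closure k n m = generate (free_grp (gens k n))
     {reduce (g @ r @ word_inv g) | g r. g \<in> carrier (free_grp (gens k n)) \<and> r \<in> relators k m}"

definition pres_grp :: "nat \<Rightarrow> nat \<Rightarrow> (nat \<Rightarrow> nat) \<Rightarrow> ((nat + nat) \<times> bool) list set monoid" where
  "pres_grp k n m = free_grp (gens k n) Mod rel_closure k n m"

definition gen_e :: "nat \<Rightarrow> nat \<Rightarrow> (nat \<Rightarrow> nat) \<Rightarrow> nat \<Rightarrow> ((nat + nat) \<times> bool) list set" where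
  "gen_e k n m i = rel_closure k n m #>\<^bsub>free_grp (gens k n)\<^esub> [(Inl i, False)]"

definition gen_h :: "nat \<Rightarrow> nat \<Rightarrow> (nat \<Rightarrow> nat) \<Rightarrow> nat \<Rightarrow> ((nat + nat) \<times> bool) list set" where
  "gen_h k n m l = rel_closure k n m #>\<^bsub>free_grp (gens k n)\<^esub> [(Inr l, False)]"

definition comm :: "('a, 'b) monoid_scheme \<Rightarrow> 'a \<Rightarrow> 'a \<Rightarrow> 'a" where
  "comm G g h = g \<otimes>\<^bsub>G\<^esub> h \<otimes>\<^bsub>G\<^esub> inv\<^bsub>G\<^esub> g \<otimes>\<^bsub>G\<^esub> inv\<^bsub>G\<^esub> h"

definition conj :: "('a, 'b) monoid_scheme \<Rightarrow> 'a \<Rightarrow> 'a \<Rightarrow> 'a" where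
  "conj G g h = g \<otimes>\<^bsub>G\<^esub> h \<otimes>\<^bsub>G\<^esub> inv\<^bsub>G\<^esub> g"

text \<open>dprod G f lo hi = f hi * f (hi-1) * ... * f lo (empty product = 1 if hi < lo).\<close>
definition dprod :: "('a, 'b) monoid_scheme \<Rightarrow> (nat \<Rightarrow> 'a) \<Rightarrow> nat \<Rightarrow> nat \<Rightarrow> 'a" where
  "dprod G f lo hi = foldr (\<lambda>i acc. f i \<otimes>\<^bsub>G\<^esub> acc) (rev [lo..<Suc hi]) \<one>\<^bsub>G\<^esub>"

text \<open>u encodes (u_1,...,u_k): lambda = (u_1..u_t), xi = (u_{t+1}..u_k).\<close>
definition S1 :: "nat \<Rightarrow> nat \<Rightarrow> (nat \<Rightarrow> nat) \<Rightarrow> ((nat + nat) \<times> bool) list set set" where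
  "S1 k n m = (let G = pres_grp k n m; e = gen_e k n m in
     {conj G (dprod G (\<lambda>i. e i [^]\<^bsub>G\<^esub> u i) (Suc t) k)
             (comm G (e t [^]\<^bsub>G\<^esub> u t) (dprod G (\<lambda>i. e i [^]\<^bsub>G\<^esub> u i) 1 (t - 1)))
      | t u. 2 \<le> t \<and> t \<le> k
        \<and> (\<forall>i\<in>{1..<t}. u i \<in> {1..m i}) \<and> (\<exists>i\<in>{1..<t}. u i \<noteq> m i)
        \<and> u t \<in> {1..m t - 1}
        \<and> (\<forall>i\<in>{t<..k}. u i \<in> {1..m i})})"

definition S2 :: "nat \<Rightarrow> nat \<Rightarrow> (nat \<Rightarrow> nat) \<Rightarrow> ((nat + nat) \<times> bool) list set set" where
  "S2 k n m = (let G = pres_grp k n m; e = gen_e k n m in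
     {conj G (dprod G (\<lambda>j. e j [^]\<^bsub>G\<^esub> (u j :: nat)) 1 k) (gen_h k n m l)
      | l u. l \<in> {1..2*n} \<and> (\<forall>j\<in>{1..k}. u j \<in> {1..m j})})"

end

theory Submission
  imports Defs
begin


lemma inv_letter_inv[simp]: "inv_letter (inv_letter a) = a"
  by (simp add: inv_letter_def)

lemma inv_letter_neq[simp]: "inv_letter a \<noteq> a" "a \<noteq> inv_letter a"
  by (auto simp add: inv_letter_def prod_eq_iff)

lemma reduce_Nil[simp]: "reduce [] = []" by (simp add: reduce_def)
lemma reduce_Cons: "reduce (a # w) = cons_red a (reduce w)" by (simp add: reduce_def)

lemma reduced_Nil[simp]: "reduced []" by (simp add: reduced_def)
lemma reduced_single[simp]: "reduced [a]" by (simp add: reduced_def)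

lemma reduced_Cons_Cons: "reduced (a # b # w) \<longleftrightarrow> b \<noteq> inv_letter a \<and> reduced (b # w)"
proof
  assume H: "reduced (a # b # w)"
  have "b \<noteq> inv_letter a" using H[unfolded reduced_def, rule_format, of 0] by simp
  moreover have "reduced (b # w)"
    unfolding reduced_def
  proof (intro allI impI)
    fix i assume "Suc i < length (b # w)"
    then show "(b # w) ! Suc i \<noteq> inv_letter ((b # w) ! i)"
      using H[unfolded reduced_def, rule_format, of "Suc i"] by simp
  qed
  ultimately show "b \<noteq> inv_letter a \<and> reduced (b # w)" by blast
next
  assume H: "b \<noteq> inv_letter a \<and> reduced (b # w)"
  show "reduced (a # b # w)"
    unfolding reduced_def
  proof (intro allI impI)
    fix i assume i: "Suc i < length (a # b # w)"
    show "(a # b # w) ! Suc i \<noteq> inv_letter ((a # b # w) ! i)"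
    proof (cases i)
      case 0 then show ?thesis using H by simp
    next
      case (Suc j) then show ?thesis
        using H[THEN conjunct2, unfolded reduced_def, rule_format, of j] i by simp
    qed
  qed
qed

lemma reduced_Cons: "reduced (a # w) \<Longrightarrow> reduced w"
  by (cases w) (auto simp: reduced_Cons_Cons)

lemma reduced_cons_red: "reduced w \<Longrightarrow> reduced (cons_red a w)"
  by (cases w) (auto simp: reduced_Cons_Cons dest: reduced_Cons)

lemma reduced_reduce[simp]: "reduced (reduce w)"
  by (induction w) (auto simp: reduce_Cons reduced_cons_red)

lemma cons_red_reduced: "reduced (a # w) \<Longrightarrow> cons_red a w = a # w"
  by (cases w) (auto simp: reduced_Cons_Cons)

lemma reduce_reduced: "reduced w \<Longrightarrow> reduce w = w"
proof (induction w)
  case (Cons a w)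
  then have "reduce w = w" using reduced_Cons by blast
  then show ?case using Cons.prems by (simp add: reduce_Cons cons_red_reduced)
qed simp

lemma reduce_reduce[simp]: "reduce (reduce w) = reduce w"
  by (simp add: reduce_reduced)

lemma cons_red_inv: "reduced x \<Longrightarrow> cons_red a (cons_red (inv_letter a) x) = x"
proof (cases x)
  case (Cons b w)
  assume r: "reduced x"
  show ?thesis
  proof (cases "b = a")
    case True
    then show ?thesis using r Cons
      by (cases w) (auto simp: reduced_Cons_Cons)
  next
    case False
    then show ?thesis using Cons by auto
  qed
qed simp

lemma foldr_cons_red_reduce:
  "reduced x \<Longrightarrow> foldr cons_red u x = foldr cons_red (reduce u) x"
proof (induction u)
  case (Cons a u)
  have IH: "foldr cons_red u x = foldr cons_red (reduce u) x" using Cons by simp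
  have rr: "reduced (foldr cons_red v x)" for v
    by (induction v) (auto simp: Cons.prems reduced_cons_red)
  show ?case
  proof (cases "reduce u")
    case Nil then show ?thesis using IH by (simp add: reduce_Cons)
  next
    case (Cons b w)
    show ?thesis
    proof (cases "b = inv_letter a")
      case True
      have "foldr cons_red (a # u) x = cons_red a (cons_red (inv_letter a) (foldr cons_red w x))"
        using IH Cons True by simp
      also have "\<dots> = foldr cons_red w x" using cons_red_inv rr by blast
      finally show ?thesis using Cons True by (simp add: reduce_Cons)
    next
      case False
      then show ?thesis using IH Cons by (simp add: reduce_Cons)
    qed
  qed
qed simp

lemma reduce_append: "reduce (u @ v) = reduce (reduce u @ reduce v)"
proof -
  have e: "reduce (x @ y) = foldr cons_red x (reduce y)" for x y :: "('a \<times> bool) list" by (simp add: reduce_def)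
  have "reduce (u @ v) = foldr cons_red u (reduce v)" by (rule e)
  also have "\<dots> = foldr cons_red (reduce u) (reduce v)"
    by (rule foldr_cons_red_reduce) simp
  also have "\<dots> = reduce (reduce u @ reduce v)"
    by (simp only: e reduce_reduce)
  finally show ?thesis .
qed

lemma reduce_append_left: "reduce (reduce u @ v) = reduce (u @ v)"
  by (metis reduce_append reduce_reduce)
lemma reduce_append_right: "reduce (u @ reduce v) = reduce (u @ v)"
  by (metis reduce_append reduce_reduce)

lemma word_inv_Nil[simp]: "word_inv [] = []" by (simp add: word_inv_def)
lemma word_inv_Cons: "word_inv (a # w) = word_inv w @ [inv_letter a]" by (simp add: word_inv_def)
lemma word_inv_append: "word_inv (u @ v) = word_inv v @ word_inv u" by (simp add: word_inv_def)
lemma word_inv_word_inv[simp]: "word_inv (word_inv w) = w"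
  by (simp add: word_inv_def rev_map comp_def)
lemma word_inv_single[simp]: "word_inv [a] = [inv_letter a]" by (simp add: word_inv_def)

lemma reduce_inv_cancel: "reduce (word_inv w @ w) = []"
proof (induction w)
  case (Cons a w)
  have "reduce (word_inv (a # w) @ a # w) = foldr cons_red (word_inv w) (cons_red (inv_letter a) (cons_red a (reduce w)))"
    by (simp add: reduce_def word_inv_Cons)
  also have "\<dots> = foldr cons_red (word_inv w) (reduce w)"
    using cons_red_inv[of "reduce w" "inv_letter a"] by simp
  also have "\<dots> = reduce (word_inv w @ w)" by (simp add: reduce_def)
  finally show ?case using Cons by simp
qed simp

lemma reduce_cancel_inv: "reduce (w @ word_inv w) = []"
  using reduce_inv_cancel[of "word_inv w"] by simp

lemma reduce_cancel_mid: "reduce (u @ word_inv v @ v @ w) = reduce (u @ w)"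
proof -
  have "reduce (word_inv v @ v @ w) = reduce w"
    using reduce_append[of "word_inv v @ v" w] reduce_inv_cancel[of v]
    by (simp add: reduce_reduce)
  then show ?thesis
    by (metis reduce_append_right)
qed

lemma reduce_cancel_mid2: "reduce (u @ v @ word_inv v @ w) = reduce (u @ w)"
  using reduce_cancel_mid[of u "word_inv v" w] by simp

lemma set_cons_red: "set (cons_red a w) \<subseteq> insert a (set w)"
  by (cases w) auto

lemma set_reduce: "set (reduce w) \<subseteq> set w"
  by (induction w) (use set_cons_red in \<open>fastforce simp: reduce_Cons\<close>)+

lemma reduced_word_inv: "reduced w \<Longrightarrow> reduced (word_inv w)"
  unfolding reduced_def word_inv_def
proof (intro allI impI)
  fix i assume r: "\<forall>i. Suc i < length w \<longrightarrow> w ! Suc i \<noteq> inv_letter (w ! i)"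
    and i: "Suc i < length (rev (map inv_letter w))"
  let ?L = "length w"
  have a: "rev (map inv_letter w) ! Suc i = inv_letter (w ! (?L - 1 - Suc i))"
    using i by (simp add: rev_nth)
  have b: "rev (map inv_letter w) ! i = inv_letter (w ! (?L - 1 - i))"
    using i by (simp add: rev_nth)
  have c: "?L - 1 - i = Suc (?L - 1 - Suc i)" using i by simp
  show "rev (map inv_letter w) ! Suc i \<noteq> inv_letter (rev (map inv_letter w) ! i)"
    using r[rule_format, of "?L - 1 - Suc i"] i unfolding a b c
    by (auto simp: inv_letter_def prod_eq_iff)
qed

lemma free_grp_group: "group (free_grp A)"
proof (rule groupI)
  show "x \<otimes>\<^bsub>free_grp A\<^esub> y \<in> carrier (free_grp A)" if "x \<in> carrier (free_grp A)" "y \<in> carrier (free_grp A)" for x y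
    using that set_reduce[of "x @ y"] by (force simp: free_grp_def)
  show "\<one>\<^bsub>free_grp A\<^esub> \<in> carrier (free_grp A)" by (simp add: free_grp_def)
  show "x \<otimes>\<^bsub>free_grp A\<^esub> y \<otimes>\<^bsub>free_grp A\<^esub> z = x \<otimes>\<^bsub>free_grp A\<^esub> (y \<otimes>\<^bsub>free_grp A\<^esub> z)" for x y z
    by (simp add: free_grp_def reduce_append_left reduce_append_right)
  show "\<one>\<^bsub>free_grp A\<^esub> \<otimes>\<^bsub>free_grp A\<^esub> x = x" if "x \<in> carrier (free_grp A)" for x
    using that by (simp add: free_grp_def reduce_reduced)
  show "\<exists>y\<in>carrier (free_grp A). y \<otimes>\<^bsub>free_grp A\<^esub> x = \<one>\<^bsub>free_grp A\<^esub>" if "x \<in> carrier (free_grp A)" for x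
    using that reduce_inv_cancel[of x] reduced_word_inv[of x]
    by (intro bexI[of _ "word_inv x"]) (auto simp: free_grp_def word_inv_def inv_letter_def)
qed

lemma carrier_free_grp: "carrier (free_grp A) = {w. set (map fst w) \<subseteq> A \<and> reduced w}"
  by (simp add: free_grp_def)
lemma mult_free_grp: "x \<otimes>\<^bsub>free_grp A\<^esub> y = reduce (x @ y)"
  by (simp add: free_grp_def)
lemma one_free_grp: "\<one>\<^bsub>free_grp A\<^esub> = []"
  by (simp add: free_grp_def)

lemma inv_free_grp: assumes "x \<in> carrier (free_grp A)"
  shows "inv\<^bsub>free_grp A\<^esub> x = word_inv x"
proof -
  have wi: "word_inv x \<in> carrier (free_grp A)"
    using assms reduced_word_inv[of x] by (auto simp: free_grp_def word_inv_def inv_letter_def)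
  show ?thesis
    by (rule group.inv_equality[OF free_grp_group])
       (use assms wi reduce_inv_cancel[of x] in \<open>simp_all add: mult_free_grp one_free_grp\<close>)
qed




context group begin

lemma fprod_carrier: "(\<And>i. i \<in> set xs \<Longrightarrow> f i \<in> carrier G) \<Longrightarrow> foldr (\<lambda>i acc. f i \<otimes> acc) xs \<one> \<in> carrier G"
  by (induction xs) auto

lemma fprod_append: "(\<And>i. i \<in> set (xs @ ys) \<Longrightarrow> f i \<in> carrier G) \<Longrightarrow>
   foldr (\<lambda>i acc. f i \<otimes> acc) (xs @ ys) \<one> = foldr (\<lambda>i acc. f i \<otimes> acc) xs \<one> \<otimes> foldr (\<lambda>i acc. f i \<otimes> acc) ys \<one>"
proof (induction xs)
  case Nil then show ?case using fprod_carrier[of ys f] by simp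
next
  case (Cons a xs)
  then show ?case using fprod_carrier[of xs f] fprod_carrier[of ys f] by (simp add: m_assoc)
qed

lemma dprod_carrier: "(\<And>i. lo \<le> i \<Longrightarrow> i \<le> hi \<Longrightarrow> f i \<in> carrier G) \<Longrightarrow> dprod G f lo hi \<in> carrier G"
  unfolding dprod_def by (rule fprod_carrier) auto

lemma dprod_empty: "hi < lo \<Longrightarrow> dprod G f lo hi = \<one>"
  unfolding dprod_def by simp

lemma dprod_cong: "(\<And>i. lo \<le> i \<Longrightarrow> i \<le> hi \<Longrightarrow> f i = g i) \<Longrightarrow> dprod G f lo hi = dprod G g lo hi"
  unfolding dprod_def by (rule foldr_cong) auto

lemma dprod_one: "(\<And>i. lo \<le> i \<Longrightarrow> i \<le> hi \<Longrightarrow> f i = \<one>) \<Longrightarrow> dprod G f lo hi = \<one>"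
proof -
  assume a: "\<And>i. lo \<le> i \<Longrightarrow> i \<le> hi \<Longrightarrow> f i = \<one>"
  have "foldr (\<lambda>i acc. f i \<otimes> acc) xs \<one> = \<one>" if "set xs \<subseteq> {lo..hi}" for xs
    using that by (induction xs) (auto simp: a)
  moreover have "set (rev [lo..<Suc hi]) \<subseteq> {lo..hi}" by auto
  ultimately show ?thesis unfolding dprod_def by blast
qed

lemma dprod_split:
  assumes "1 \<le> lo" "lo \<le> j" "j \<le> hi" "\<And>i. lo \<le> i \<Longrightarrow> i \<le> hi \<Longrightarrow> f i \<in> carrier G"
  shows "dprod G f lo hi = dprod G f (Suc j) hi \<otimes> f j \<otimes> dprod G f lo (j - 1)"
proof -
  have l: "rev [lo..<Suc hi] = rev [Suc j..<Suc hi] @ [j] @ rev [lo..<j]"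
  proof -
    have "[lo..<Suc hi] = [lo..<j] @ [j] @ [Suc j..<Suc hi]"
      using assms upt_add_eq_append[of lo j "Suc hi - j"] upt_conv_Cons[of j "Suc hi"] by simp
    then show ?thesis by simp
  qed
  have j1: "Suc (j - 1) = j" using assms by simp
  let ?F = "\<lambda>xs. foldr (\<lambda>i acc. f i \<otimes> acc) xs \<one>"
  have c: "\<And>i. i \<in> set (rev [Suc j..<Suc hi] @ [j] @ rev [lo..<j]) \<Longrightarrow> f i \<in> carrier G"
    using assms(2,3,4) by auto
  have "?F (rev [Suc j..<Suc hi] @ ([j] @ rev [lo..<j])) = ?F (rev [Suc j..<Suc hi]) \<otimes> ?F ([j] @ rev [lo..<j])"
    by (rule fprod_append) (use c in auto)
  also have "?F ([j] @ rev [lo..<j]) = f j \<otimes> ?F (rev [lo..<j])" by simp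
  finally have "?F (rev [lo..<Suc hi]) = ?F (rev [Suc j..<Suc hi]) \<otimes> (f j \<otimes> ?F (rev [lo..<j]))"
    unfolding l by simp
  also have "\<dots> = ?F (rev [Suc j..<Suc hi]) \<otimes> f j \<otimes> ?F (rev [lo..<j])"
    by (rule m_assoc[symmetric]) (use c in \<open>auto intro!: fprod_carrier\<close>)
  finally show ?thesis unfolding dprod_def j1 .
qed

end

locale pres =
  fixes k n :: nat and m :: "nat \<Rightarrow> nat"
  assumes m2: "\<forall>i\<in>{1..k}. m i \<ge> 2"
begin

abbreviation "FG \<equiv> free_grp (gens k n)"
abbreviation "H \<equiv> rel_closure k n m"
abbreviation "G \<equiv> pres_grp k n m"
abbreviation "e \<equiv> gen_e k n m"
abbreviation "hh \<equiv> gen_h k n m"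

definition okw :: "((nat + nat) \<times> bool) list \<Rightarrow> bool" where
  "okw w \<longleftrightarrow> set (map fst w) \<subseteq> gens k n"

lemma okw_append[simp]: "okw (u @ v) \<longleftrightarrow> okw u \<and> okw v" by (auto simp: okw_def)
lemma okw_Cons[simp]: "okw (x # v) \<longleftrightarrow> fst x \<in> gens k n \<and> okw v" by (auto simp: okw_def)
lemma okw_Nil[simp]: "okw []" by (auto simp: okw_def)
lemma okw_word_inv[simp]: "okw (word_inv w) \<longleftrightarrow> okw w"
  by (simp add: okw_def word_inv_def inv_letter_def image_image)
lemma okw_reduce: "okw w \<Longrightarrow> okw (reduce w)"
  using set_reduce[of w] by (force simp: okw_def)
lemma okw_replicate[simp]: "okw (replicate c x) \<longleftrightarrow> c = 0 \<or> fst x \<in> gens k n"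
  by (auto simp: okw_def)

lemma carrier_FG: "w \<in> carrier FG \<longleftrightarrow> okw w \<and> reduced w"
  by (simp add: carrier_free_grp okw_def)

lemma reduce_carrier: "okw w \<Longrightarrow> reduce w \<in> carrier FG"
  by (simp add: carrier_FG okw_reduce)

lemma gens_Inl[simp]: "Inl i \<in> gens k n \<longleftrightarrow> i \<in> {1..k}" by (auto simp: gens_def)
lemma gens_Inr[simp]: "Inr i \<in> gens k n \<longleftrightarrow> i \<in> {1..2*n}" by (auto simp: gens_def)

sublocale FG: group FG by (rule free_grp_group)

lemma reduced_replicate: "reduced (replicate c (x, False))"
proof (induction c)
  case (Suc c)
  then show ?case by (cases c) (auto simp: reduced_Cons_Cons inv_letter_def)
qed simp


lemma relators_carrier: "relators k m \<subseteq> carrier FG"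
  by (auto simp: relators_def carrier_FG reduced_replicate)

lemma rel_gen_eq: "{reduce (g @ r @ word_inv g) | g r. g \<in> carrier FG \<and> r \<in> relators k m}
   = {g \<otimes>\<^bsub>FG\<^esub> r \<otimes>\<^bsub>FG\<^esub> inv\<^bsub>FG\<^esub> g | g r. g \<in> carrier FG \<and> r \<in> relators k m}"
proof -
  have eq: "reduce (g @ r @ word_inv g) = g \<otimes>\<^bsub>FG\<^esub> r \<otimes>\<^bsub>FG\<^esub> inv\<^bsub>FG\<^esub> g"
    if "g \<in> carrier FG" for g r
    using that by (simp add: mult_free_grp inv_free_grp reduce_append_left)
  show ?thesis
  proof (rule Set.set_eqI, rule iffI)
    fix x assume "x \<in> {reduce (g @ r @ word_inv g) | g r. g \<in> carrier FG \<and> r \<in> relators k m}"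
    then obtain g r where x: "x = reduce (g @ r @ word_inv g)" "g \<in> carrier FG" "r \<in> relators k m" by auto
    then have "x = g \<otimes>\<^bsub>FG\<^esub> r \<otimes>\<^bsub>FG\<^esub> inv\<^bsub>FG\<^esub> g" using eq by simp
    then show "x \<in> {g \<otimes>\<^bsub>FG\<^esub> r \<otimes>\<^bsub>FG\<^esub> inv\<^bsub>FG\<^esub> g | g r. g \<in> carrier FG \<and> r \<in> relators k m}"
      using x(2,3) by auto
  next
    fix x assume "x \<in> {g \<otimes>\<^bsub>FG\<^esub> r \<otimes>\<^bsub>FG\<^esub> inv\<^bsub>FG\<^esub> g | g r. g \<in> carrier FG \<and> r \<in> relators k m}"
    then obtain g r where x: "x = g \<otimes>\<^bsub>FG\<^esub> r \<otimes>\<^bsub>FG\<^esub> inv\<^bsub>FG\<^esub> g" "g \<in> carrier FG" "r \<in> relators k m" by auto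
    then have "x = reduce (g @ r @ word_inv g)" using eq by simp
    then show "x \<in> {reduce (g @ r @ word_inv g) | g r. g \<in> carrier FG \<and> r \<in> relators k m}"
      using x(2,3) by auto
  qed
qed

lemma H_normal: "H \<lhd> FG"
proof -
  let ?S = "{g \<otimes>\<^bsub>FG\<^esub> r \<otimes>\<^bsub>FG\<^esub> inv\<^bsub>FG\<^esub> g | g r. g \<in> carrier FG \<and> r \<in> relators k m}"
  have "generate FG ?S \<lhd> FG"
  proof (rule FG.normal_generateI)
    show "?S \<subseteq> carrier FG" using relators_carrier by auto
    fix x g assume x: "x \<in> ?S" and g: "g \<in> carrier FG"
    then obtain g' r where x': "x = g' \<otimes>\<^bsub>FG\<^esub> r \<otimes>\<^bsub>FG\<^esub> inv\<^bsub>FG\<^esub> g'" "g' \<in> carrier FG" "r \<in> relators k m"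
      by blast
    have r: "r \<in> carrier FG" using x' relators_carrier by auto
    have "g \<otimes>\<^bsub>FG\<^esub> x \<otimes>\<^bsub>FG\<^esub> inv\<^bsub>FG\<^esub> g
        = (g \<otimes>\<^bsub>FG\<^esub> g') \<otimes>\<^bsub>FG\<^esub> r \<otimes>\<^bsub>FG\<^esub> inv\<^bsub>FG\<^esub> (g \<otimes>\<^bsub>FG\<^esub> g')"
      using g x' r by (simp add: FG.m_assoc FG.inv_mult_group)
    then show "g \<otimes>\<^bsub>FG\<^esub> x \<otimes>\<^bsub>FG\<^esub> inv\<^bsub>FG\<^esub> g \<in> ?S"
      using g x' by blast
  qed
  then show ?thesis unfolding rel_closure_def rel_gen_eq .
qed

sublocale H: normal H FG by (rule H_normal)

lemma G_group: "group G"
  unfolding pres_grp_def by (rule H.factorgroup_is_group)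

sublocale G: group G by (rule G_group)

definition pi :: "((nat + nat) \<times> bool) list \<Rightarrow> ((nat + nat) \<times> bool) list set" where
  "pi w = H #>\<^bsub>FG\<^esub> reduce w"

lemma pi_carrier: "okw w \<Longrightarrow> pi w \<in> carrier G"
  unfolding pi_def pres_grp_def carrier_FactGroup using reduce_carrier by blast

lemma pi_mult: "okw u \<Longrightarrow> okw v \<Longrightarrow> pi (u @ v) = pi u \<otimes>\<^bsub>G\<^esub> pi v"
proof -
  assume u: "okw u" and v: "okw v"
  have "pi (u @ v) = H #>\<^bsub>FG\<^esub> (reduce u \<otimes>\<^bsub>FG\<^esub> reduce v)"
    unfolding pi_def mult_free_grp by (metis reduce_append)
  also have "\<dots> = (H #>\<^bsub>FG\<^esub> reduce u) \<otimes>\<^bsub>FG Mod H\<^esub> (H #>\<^bsub>FG\<^esub> reduce v)"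
    using hom_mult[OF H.r_coset_hom_Mod, of "reduce u" "reduce v"] reduce_carrier u v by simp
  finally show ?thesis unfolding pi_def pres_grp_def .
qed

lemma pi_Nil: "pi [] = \<one>\<^bsub>G\<^esub>"
  unfolding pi_def pres_grp_def using FG.coset_mult_one[of H] H.subset
  by (simp add: one_free_grp)

lemma pi_inv: "okw u \<Longrightarrow> pi (word_inv u) = inv\<^bsub>G\<^esub> pi u"
proof -
  assume u: "okw u"
  have "pi (word_inv u @ u) = pi []"
    unfolding pi_def using reduce_inv_cancel[of u] by simp
  then have "pi (word_inv u) \<otimes>\<^bsub>G\<^esub> pi u = \<one>\<^bsub>G\<^esub>" using pi_mult[of "word_inv u" u] u pi_Nil by simp
  then show ?thesis using u pi_carrier G.inv_equality[of "pi (word_inv u)" "pi u"] by simp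
qed

lemma pi_reduce: "pi (reduce w) = pi w" unfolding pi_def by simp

lemma pi_surj: "c \<in> carrier G \<Longrightarrow> \<exists>w. okw w \<and> reduced w \<and> c = pi w"
  unfolding pres_grp_def carrier_FactGroup pi_def
  by (auto simp: carrier_FG reduce_reduced)

lemma H_sub: "H \<subseteq> carrier FG" using H.subset .

lemma pi_rel: "r \<in> H \<Longrightarrow> pi r = \<one>\<^bsub>G\<^esub>"
proof -
  assume r: "r \<in> H"
  then have "reduce r = r" using H_sub by (auto simp: carrier_FG reduce_reduced)
  then show ?thesis unfolding pi_def pres_grp_def using H.rcos_const[OF FG.is_group r] by simp
qed

lemma pi_single: "pi [x] = H #>\<^bsub>FG\<^esub> [x]" unfolding pi_def by (simp add: reduce_Cons)

lemma e_pi: "e i = pi [(Inl i, False)]" unfolding gen_e_def pi_single ..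
lemma h_pi: "hh l = pi [(Inr l, False)]" unfolding gen_h_def pi_single ..

lemma e_carrier: "i \<in> {1..k} \<Longrightarrow> e i \<in> carrier G"
  unfolding e_pi by (rule pi_carrier) simp
lemma h_carrier: "l \<in> {1..2*n} \<Longrightarrow> hh l \<in> carrier G"
  unfolding h_pi by (rule pi_carrier) simp

lemma pi_replicate: "fst x \<in> gens k n \<Longrightarrow> pi (replicate c x) = pi [x] [^]\<^bsub>G\<^esub> c"
proof (induction c)
  case 0 then show ?case using pi_Nil by simp
next
  case (Suc c)
  have "pi (replicate (Suc c) x) = pi (replicate c x @ [x])" by (simp add: replicate_append_same)
  also have "\<dots> = pi (replicate c x) \<otimes>\<^bsub>G\<^esub> pi [x]" using Suc.prems by (intro pi_mult) auto
  finally show ?case using Suc by simp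
qed

lemma e_pow_m: "i \<in> {1..k} \<Longrightarrow> e i [^]\<^bsub>G\<^esub> m i = \<one>\<^bsub>G\<^esub>"
proof -
  assume i: "i \<in> {1..k}"
  let ?r = "replicate (m i) (Inl i, False)"
  have rc: "?r \<in> carrier FG" using relators_carrier i by (auto simp: relators_def)
  have "?r = reduce ([] @ ?r @ word_inv [])" by (simp add: reduce_reduced reduced_replicate)
  moreover have "?r \<in> relators k m" using i by (auto simp: relators_def)
  moreover have "([] :: ((nat + nat) \<times> bool) list) \<in> carrier FG" by (simp add: carrier_FG)
  ultimately have "\<exists>g r. ?r = reduce (g @ r @ word_inv g) \<and> g \<in> carrier FG \<and> r \<in> relators k m"
    by blast
  then have "?r \<in> {reduce (g @ r @ word_inv g) | g r. g \<in> carrier FG \<and> r \<in> relators k m}"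
    by simp
  then have "?r \<in> H" unfolding rel_closure_def by (rule generate.incl)
  then have "pi ?r = \<one>\<^bsub>G\<^esub>" by (rule pi_rel)
  then show ?thesis using pi_replicate[of "(Inl i, False)" "m i"] i by (simp add: e_pi)
qed

end



context group begin

lemma inv_cancel_l [simp]: "x \<in> carrier G \<Longrightarrow> y \<in> carrier G \<Longrightarrow> inv x \<otimes> (x \<otimes> y) = y"
  by (simp add: m_assoc[symmetric])
lemma inv_cancel_r [simp]: "x \<in> carrier G \<Longrightarrow> y \<in> carrier G \<Longrightarrow> x \<otimes> (inv x \<otimes> y) = y"
  by (simp add: m_assoc[symmetric])

lemma schreier_id:
  assumes P: "P \<in> carrier G" and E: "E \<in> carrier G" and Q: "Q \<in> carrier G"
  shows "P \<otimes> E [^] (a::nat) \<otimes> Q \<otimes> E =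
     conj G P (comm G (E [^] a) Q) \<otimes> inv (conj G P (comm G (E [^] Suc a) Q)) \<otimes> (P \<otimes> E [^] Suc a \<otimes> Q)"
proof -
  define A where "A = E [^] a"
  have A: "A \<in> carrier G" unfolding A_def using E by simp
  have s: "E [^] Suc a = A \<otimes> E" unfolding A_def by simp
  have "inv (conj G P (comm G (A \<otimes> E) Q)) \<otimes> (P \<otimes> (A \<otimes> E) \<otimes> Q) = P \<otimes> Q \<otimes> (A \<otimes> E)"
    unfolding conj_def comm_def using P E Q A by (simp add: m_assoc inv_mult_group)
  then have "conj G P (comm G A Q) \<otimes> inv (conj G P (comm G (A \<otimes> E) Q)) \<otimes> (P \<otimes> (A \<otimes> E) \<otimes> Q)
      = conj G P (comm G A Q) \<otimes> (P \<otimes> Q \<otimes> (A \<otimes> E))"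
    unfolding conj_def comm_def using P E Q A by (simp add: m_assoc)
  also have "\<dots> = P \<otimes> A \<otimes> Q \<otimes> E"
    unfolding conj_def comm_def using P E Q A by (simp add: m_assoc inv_mult_group)
  finally show ?thesis unfolding s A_def[symmetric] by simp
qed

definition eps :: "('a \<times> bool) list \<Rightarrow> 'a" where
  "eps w = foldr (\<lambda>x acc. (if snd x then inv (fst x) else fst x) \<otimes> acc) w \<one>"

definition okl :: "('a \<times> bool) list \<Rightarrow> bool" where
  "okl w \<longleftrightarrow> fst ` set w \<subseteq> carrier G"

lemma okl_simps[simp]: "okl []" "okl (x # w) \<longleftrightarrow> fst x \<in> carrier G \<and> okl w"
  "okl (u @ v) \<longleftrightarrow> okl u \<and> okl v"
  by (auto simp: okl_def)

lemma okl_word_inv[simp]: "okl (word_inv w) \<longleftrightarrow> okl w"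
  by (simp add: okl_def word_inv_def inv_letter_def image_image)

lemma eps_Nil[simp]: "eps [] = \<one>" by (simp add: eps_def)
lemma eps_Cons: "eps (x # w) = (if snd x then inv (fst x) else fst x) \<otimes> eps w" by (simp add: eps_def)

lemma eps_carrier[simp]: "okl w \<Longrightarrow> eps w \<in> carrier G"
  by (induction w) (auto simp: eps_Cons)

lemma eps_append: "okl u \<Longrightarrow> okl v \<Longrightarrow> eps (u @ v) = eps u \<otimes> eps v"
  by (induction u) (auto simp: eps_Cons m_assoc)

lemma eps_single[simp]: "fst x \<in> carrier G \<Longrightarrow> eps [x] = (if snd x then inv (fst x) else fst x)"
  by (simp add: eps_Cons)

lemma eps_word_inv: "okl u \<Longrightarrow> eps (word_inv u) = inv (eps u)"
proof (induction u)
  case (Cons x u)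
  then show ?case
    by (auto simp: word_inv_Cons eps_append eps_Cons inv_letter_def inv_mult_group)
qed simp

lemma eps_cons_red: "fst a \<in> carrier G \<Longrightarrow> okl v \<Longrightarrow> eps (cons_red a v) = eps (a # v)"
proof (cases v)
  case (Cons b w)
  assume a: "fst a \<in> carrier G" and v: "okl v"
  show ?thesis
  proof (cases "b = inv_letter a")
    case True
    then show ?thesis using Cons a v
      by (auto simp: eps_Cons inv_letter_def m_assoc[symmetric])
  next
    case False then show ?thesis using Cons by simp
  qed
qed simp

lemma okl_cons_red: "fst a \<in> carrier G \<Longrightarrow> okl v \<Longrightarrow> okl (cons_red a v)"
  by (cases v) auto

lemma okl_reduce: "okl w \<Longrightarrow> okl (reduce w)"
  using set_reduce[of w] by (auto simp: okl_def)

lemma eps_reduce: "okl w \<Longrightarrow> eps (reduce w) = eps w"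
proof (induction w)
  case (Cons a w)
  then show ?case using okl_reduce[of w]
    by (simp add: reduce_Cons eps_cons_red eps_Cons)
qed simp

end

context pres begin

definition dpw :: "(nat \<Rightarrow> nat) \<Rightarrow> nat \<Rightarrow> nat \<Rightarrow> ((nat + nat) \<times> bool) list" where
  "dpw u lo hi = concat (map (\<lambda>i. replicate (u i) (Inl i, False)) (rev [lo..<Suc hi]))"

lemma okw_concat: "set xs \<subseteq> {1..k} \<Longrightarrow> okw (concat (map (\<lambda>i. replicate (u i) (Inl i, False)) xs))"
  by (induction xs) auto

lemma okw_dpw: "1 \<le> lo \<Longrightarrow> hi \<le> k \<Longrightarrow> okw (dpw u lo hi)"
  unfolding dpw_def by (rule okw_concat) auto

lemma pi_concat: "set xs \<subseteq> {1..k} \<Longrightarrow> pi (concat (map (\<lambda>i. replicate (u i) (Inl i, False)) xs))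
   = foldr (\<lambda>i acc. e i [^]\<^bsub>G\<^esub> u i \<otimes>\<^bsub>G\<^esub> acc) xs \<one>\<^bsub>G\<^esub>"
proof (induction xs)
  case Nil then show ?case by (simp add: pi_Nil)
next
  case (Cons a xs)
  have "pi (concat (map (\<lambda>i. replicate (u i) (Inl i, False)) (a # xs)))
     = pi (replicate (u a) (Inl a, False)) \<otimes>\<^bsub>G\<^esub> pi (concat (map (\<lambda>i. replicate (u i) (Inl i, False)) xs))"
    using Cons.prems by (simp add: pi_mult okw_concat)
  then show ?case using Cons by (simp add: pi_replicate e_pi[symmetric])
qed

lemma pi_dpw: "1 \<le> lo \<Longrightarrow> hi \<le> k \<Longrightarrow> pi (dpw u lo hi) = dprod G (\<lambda>i. e i [^]\<^bsub>G\<^esub> u i) lo hi"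
  unfolding dpw_def dprod_def by (rule pi_concat) auto

lemma e_pow_closed[simp]: "i \<in> {1..k} \<Longrightarrow> e i [^]\<^bsub>G\<^esub> (c::nat) \<in> carrier G"
  using e_carrier by simp

lemma e_pow_mod: "i \<in> {1..k} \<Longrightarrow> e i [^]\<^bsub>G\<^esub> (c::nat) = e i [^]\<^bsub>G\<^esub> (c mod m i)"
proof -
  assume i: "i \<in> {1..k}"
  have ec: "e i \<in> carrier G" using i e_carrier by simp
  have "e i [^]\<^bsub>G\<^esub> c = e i [^]\<^bsub>G\<^esub> (m i * (c div m i)) \<otimes>\<^bsub>G\<^esub> e i [^]\<^bsub>G\<^esub> (c mod m i)"
    using G.nat_pow_mult[OF ec, of "m i * (c div m i)" "c mod m i"] by simp
  also have "e i [^]\<^bsub>G\<^esub> (m i * (c div m i)) = (e i [^]\<^bsub>G\<^esub> m i) [^]\<^bsub>G\<^esub> (c div m i)"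
    using G.nat_pow_pow[OF ec] by simp
  also have "\<dots> = \<one>\<^bsub>G\<^esub>" using i e_pow_m by simp
  finally have "e i [^]\<^bsub>G\<^esub> c = \<one>\<^bsub>G\<^esub> \<otimes>\<^bsub>G\<^esub> e i [^]\<^bsub>G\<^esub> (c mod m i)" .
  then show ?thesis using G.l_one[OF G.nat_pow_closed[OF ec]] by metis
qed

definition addv :: "(nat \<Rightarrow> int) \<Rightarrow> (nat \<Rightarrow> int) \<Rightarrow> nat \<Rightarrow> int" where
  "addv s d = (\<lambda>i. s i + d i)"

definition zv :: "nat \<Rightarrow> int" where "zv = (\<lambda>i. 0)"

fun ph :: "(nat + nat) \<times> bool \<Rightarrow> nat \<Rightarrow> int" where
  "ph (Inl j, b) = (\<lambda>i. if i = j then (if b then -1 else 1) else 0)"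
| "ph (Inr l, b) = zv"

fun ex :: "((nat + nat) \<times> bool) list \<Rightarrow> nat \<Rightarrow> int" where
  "ex [] = zv"
| "ex (x # w) = addv (ph x) (ex w)"

definition eqm :: "(nat \<Rightarrow> int) \<Rightarrow> (nat \<Rightarrow> int) \<Rightarrow> bool" where
  "eqm s s' \<longleftrightarrow> (\<forall>i. s i mod int (m i) = s' i mod int (m i))"

definition md :: "(nat \<Rightarrow> int) \<Rightarrow> nat \<Rightarrow> nat" where
  "md s i = nat (s i mod int (m i))"

definition U :: "(nat \<Rightarrow> int) \<Rightarrow> nat \<Rightarrow> nat" where
  "U s i = (if md s i = 0 then m i else md s i)"

definition tG :: "(nat \<Rightarrow> int) \<Rightarrow> ((nat + nat) \<times> bool) list set" where
  "tG s = dprod G (\<lambda>i. e i [^]\<^bsub>G\<^esub> U s i) 1 k"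

definition elem :: "(nat \<Rightarrow> int) \<Rightarrow> nat \<Rightarrow> nat \<Rightarrow> ((nat + nat) \<times> bool) list set" where
  "elem s j a = conj G (dprod G (\<lambda>i. e i [^]\<^bsub>G\<^esub> U s i) (Suc j) k)
      (comm G (e j [^]\<^bsub>G\<^esub> a) (dprod G (\<lambda>i. e i [^]\<^bsub>G\<^esub> U s i) 1 (j - 1)))"

definition cnd :: "(nat \<Rightarrow> int) \<Rightarrow> nat \<Rightarrow> bool" where
  "cnd s j \<longleftrightarrow> (\<exists>i\<in>{1..<j}. md s i \<noteq> 0)"

definition C :: "(nat \<Rightarrow> int) \<Rightarrow> nat \<Rightarrow> nat \<Rightarrow> (((nat + nat) \<times> bool) list set \<times> bool) list" where
  "C s j a = (if 1 \<le> a \<and> a < m j \<and> cnd s j then [(elem s j a, False)] else [])"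

definition sub1 :: "(nat \<Rightarrow> int) \<Rightarrow> nat \<Rightarrow> nat \<Rightarrow> int" where
  "sub1 s j = (\<lambda>i. if i = j then s i - 1 else s i)"

fun gam :: "(nat \<Rightarrow> int) \<Rightarrow> (nat + nat) \<times> bool \<Rightarrow> (((nat + nat) \<times> bool) list set \<times> bool) list" where
  "gam s (Inl j, False) = C s j (md s j) @ word_inv (C s j (Suc (md s j)))"
| "gam s (Inl j, True) = C s j (md s j) @ word_inv (C s j (md (sub1 s j) j))"
| "gam s (Inr l, b) = [(conj G (tG s) (hh l), b)]"

fun T :: "(nat \<Rightarrow> int) \<Rightarrow> ((nat + nat) \<times> bool) list \<Rightarrow> (((nat + nat) \<times> bool) list set \<times> bool) list" where
  "T s [] = []"
| "T s (x # w) = gam s x @ T (addv s (ph x)) w"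

lemma addv_assoc: "addv (addv a b) c = addv a (addv b c)"
  by (simp add: addv_def add.assoc)
lemma addv_zv[simp]: "addv s zv = s" "addv zv s = s"
  by (simp_all add: addv_def zv_def)

lemma T_append: "T s (u @ v) = T s u @ T (addv s (ex u)) v"
  by (induction u arbitrary: s) (simp_all add: addv_assoc)

lemma ex_append: "ex (u @ v) = addv (ex u) (ex v)"
  by (induction u) (simp_all add: addv_assoc)

lemma ph_inv: "addv (ph x) (ph (inv_letter x)) = zv"
  by (cases x rule: ph.cases) (auto simp: inv_letter_def addv_def zv_def)

lemma ph_inv': "addv (addv s (ph x)) (ph (inv_letter x)) = s"
  by (simp add: addv_assoc ph_inv)

lemma ex_cons_red: "ex (cons_red a v) = ex (a # v)"
proof (cases v)
  case (Cons b w)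
  then show ?thesis
  proof (cases "b = inv_letter a")
    case True
    have "ex (a # v) = addv (addv (ph a) (ph (inv_letter a))) (ex w)"
      using Cons True by (simp add: addv_assoc)
    then show ?thesis using Cons True by (simp add: ph_inv)
  qed simp
qed simp

lemma ex_reduce: "ex (reduce w) = ex w"
  by (induction w) (simp_all add: reduce_Cons ex_cons_red)

lemma ph_inv_pt: "ph (inv_letter x) i = - ph x i"
  by (cases x rule: ph.cases) (auto simp: inv_letter_def zv_def)

lemma ex_word_inv_pt: "ex (word_inv w) i = - ex w i"
proof (induction w)
  case Nil then show ?case by (simp add: zv_def)
next
  case (Cons x w)
  have "ex (word_inv (x # w)) i = ex (word_inv w) i + ph (inv_letter x) i"
    by (simp add: word_inv_Cons ex_append addv_def zv_def)
  then show ?case using Cons by (simp add: ph_inv_pt addv_def)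
qed

lemma ex_word_inv: "ex (word_inv w) = (\<lambda>i. - ex w i)"
  using ex_word_inv_pt by auto

lemma eqm_refl[simp]: "eqm s s" by (simp add: eqm_def)
lemma eqm_sym: "eqm s s' \<Longrightarrow> eqm s' s" by (simp add: eqm_def)
lemma eqm_trans: "eqm a b \<Longrightarrow> eqm b c \<Longrightarrow> eqm a c" by (simp add: eqm_def)
lemma eqm_addv: "eqm a a' \<Longrightarrow> eqm b b' \<Longrightarrow> eqm (addv a b) (addv a' b')"
  unfolding eqm_def addv_def by (auto intro: mod_add_cong)
lemma eqm_sub1: "eqm s s' \<Longrightarrow> eqm (sub1 s j) (sub1 s' j)"
  unfolding eqm_def sub1_def by (auto intro: mod_diff_cong)
lemma md_eqm: "eqm s s' \<Longrightarrow> md s = md s'"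
  unfolding eqm_def md_def by auto

lemma U_md: "md s = md s' \<Longrightarrow> U s = U s'" unfolding U_def by (auto simp: fun_eq_iff)
lemma tG_md: "md s = md s' \<Longrightarrow> tG s = tG s'" unfolding tG_def using U_md[of s s'] by simp
lemma elem_md: "md s = md s' \<Longrightarrow> elem s = elem s'" unfolding elem_def using U_md[of s s'] by simp
lemma cnd_md: "md s = md s' \<Longrightarrow> cnd s = cnd s'" unfolding cnd_def by simp
lemma C_md: "md s = md s' \<Longrightarrow> C s = C s'" unfolding C_def
  using elem_md[of s s'] cnd_md[of s s'] by (simp add: fun_eq_iff)

lemma gam_eqm: "eqm s s' \<Longrightarrow> gam s x = gam s' x"
proof -
  assume a: "eqm s s'"
  obtain y b where x: "x = (y, b)" by (cases x)
  show ?thesis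
  proof (cases y)
    case (Inl j)
    then show ?thesis using x md_eqm[OF a] md_eqm[OF eqm_sub1[OF a]] C_md[OF md_eqm[OF a]]
      by (cases b) simp_all
  next
    case (Inr l)
    then show ?thesis using x tG_md[OF md_eqm[OF a]] by simp
  qed
qed

lemma T_eqm: "eqm s s' \<Longrightarrow> T s w = T s' w"
proof (induction w arbitrary: s s')
  case (Cons x w)
  then show ?case using gam_eqm[OF Cons.prems] eqm_addv[OF Cons.prems eqm_refl] by simp
qed simp

lemma C_indep: "(\<And>i. i \<noteq> j \<Longrightarrow> md s i = md s' i) \<Longrightarrow> C s j = C s' j"
proof -
  assume a: "\<And>i. i \<noteq> j \<Longrightarrow> md s i = md s' i"
  have u: "i \<noteq> j \<Longrightarrow> U s i = U s' i" for i using a by (simp add: U_def)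
  have "elem s j = elem s' j"
    unfolding elem_def
    by (rule ext, subst G.dprod_cong[of "Suc j" k _ "\<lambda>i. e i [^]\<^bsub>G\<^esub> U s' i"], simp add: u,
        subst G.dprod_cong[of 1 "j - 1" _ "\<lambda>i. e i [^]\<^bsub>G\<^esub> U s' i"], simp add: u) simp
  moreover have "cnd s j = cnd s' j" unfolding cnd_def using a by auto
  ultimately show ?thesis unfolding C_def by (simp add: fun_eq_iff)
qed

lemma md_addv_other: "i \<noteq> j \<Longrightarrow> md (addv s (ph (Inl j, b))) i = md s i"
  by (cases b) (simp_all add: md_def addv_def)
lemma md_sub1_other: "i \<noteq> j \<Longrightarrow> md (sub1 s j) i = md s i"
  by (simp add: md_def sub1_def)

lemma C_addv: "C (addv s (ph (Inl j, b))) j = C s j"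
  by (rule C_indep, rule md_addv_other)
lemma C_sub1: "C (sub1 s j) j = C s j"
  by (rule C_indep, rule md_sub1_other)

lemma m_pos: "j \<in> {1..k} \<Longrightarrow> m j > 0" using m2 by force

lemma md_lt: "j \<in> {1..k} \<Longrightarrow> md s j < m j"
proof -
  assume j: "j \<in> {1..k}"
  have "s j mod int (m j) < int (m j)" "0 \<le> s j mod int (m j)" using m_pos[OF j] by simp_all
  then show ?thesis unfolding md_def by (simp add: nat_less_iff)
qed

lemma Csuc: assumes j: "j \<in> {1..k}"
  shows "C s j (Suc (md s j)) = C s j (md (addv s (ph (Inl j, False))) j)"
proof -
  have mp: "int (m j) > 0" using m_pos[OF j] by simp
  have r: "0 \<le> s j mod int (m j)" "s j mod int (m j) < int (m j)" using mp by auto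
  have e: "md (addv s (ph (Inl j, False))) j = nat ((s j + 1) mod int (m j))"
    by (simp add: md_def addv_def)
  show ?thesis
  proof (cases "Suc (md s j) < m j")
    case True
    then have "s j mod int (m j) + 1 < int (m j)" using r unfolding md_def by linarith
    have "(s j + 1) mod int (m j) = (s j mod int (m j) + 1) mod int (m j)"
      by (simp add: mod_add_left_eq)
    also have "\<dots> = s j mod int (m j) + 1"
      using r \<open>s j mod int (m j) + 1 < int (m j)\<close> by (intro mod_pos_pos_trivial) auto
    finally have "(s j + 1) mod int (m j) = s j mod int (m j) + 1" .
    then have "md (addv s (ph (Inl j, False))) j = Suc (md s j)" using e r unfolding md_def by simp
    then show ?thesis by simp
  next
    case False
    then have "Suc (md s j) = m j" using md_lt[OF j, of s] by simp
    then have "s j mod int (m j) + 1 = int (m j)" using r unfolding md_def by linarith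
    have "(s j + 1) mod int (m j) = (s j mod int (m j) + 1) mod int (m j)"
      by (simp add: mod_add_left_eq)
    then have "(s j + 1) mod int (m j) = 0"
      using \<open>s j mod int (m j) + 1 = int (m j)\<close> by simp
    then have "md (addv s (ph (Inl j, False))) j = 0" using e by simp
    then show ?thesis using \<open>Suc (md s j) = m j\<close> by (simp add: C_def)
  qed
qed

lemma addv_sub1: "addv (sub1 s j) (ph (Inl j, False)) = s"
  by (simp add: addv_def sub1_def fun_eq_iff)
lemma sub1_addv: "sub1 (addv s (ph (Inl j, False))) j = s"
  by (simp add: addv_def sub1_def fun_eq_iff)
lemma addv_True: "addv s (ph (Inl j, True)) = sub1 s j"
  by (simp add: addv_def sub1_def fun_eq_iff)

lemma Csuc_sub1: "j \<in> {1..k} \<Longrightarrow> C s j (Suc (md (sub1 s j) j)) = C s j (md s j)"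
proof -
  assume j: "j \<in> {1..k}"
  have "C s j (Suc (md (sub1 s j) j)) = C (sub1 s j) j (Suc (md (sub1 s j) j))" by (simp only: C_sub1)
  also have "\<dots> = C (sub1 s j) j (md (addv (sub1 s j) (ph (Inl j, False))) j)" by (rule Csuc[OF j])
  also have "\<dots> = C s j (md s j)" by (simp only: addv_sub1 C_sub1)
  finally show ?thesis .
qed

lemma reduce_Nil_prefix: "reduce u = [] \<Longrightarrow> reduce (u @ v) = reduce v"
  by (metis append_Nil reduce_append_left)

lemma reduce_inv_unique: "reduce (a @ b) = [] \<Longrightarrow> reduce b = reduce (word_inv a)"
proof -
  assume h: "reduce (a @ b) = []"
  have "reduce b = reduce ([] @ word_inv a @ a @ b)" using reduce_cancel_mid[of "[]" a b] by simp
  also have "\<dots> = reduce (word_inv a @ reduce (a @ b))" by (simp add: reduce_append_right)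
  finally show ?thesis using h by simp
qed

lemma gam_cancel: "fst x \<in> gens k n \<Longrightarrow> reduce (gam s x @ gam (addv s (ph x)) (inv_letter x)) = []"
proof -
  assume g: "fst x \<in> gens k n"
  obtain y b where x: "x = (y, b)" by (cases x)
  show ?thesis
  proof (cases y)
    case (Inl j)
    then have j: "j \<in> {1..k}" using g x by simp
    show ?thesis
    proof (cases b)
      case False
      let ?s' = "addv s (ph (Inl j, False))"
      have "gam ?s' (Inl j, True) = C ?s' j (md ?s' j) @ word_inv (C ?s' j (md (sub1 ?s' j) j))"
        by simp
      also have "\<dots> = C s j (Suc (md s j)) @ word_inv (C s j (md s j))"
        by (simp only: C_addv sub1_addv Csuc[OF j, of s])
      finally have "gam ?s' (Inl j, True) = C s j (Suc (md s j)) @ word_inv (C s j (md s j))" .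
      then show ?thesis using x Inl False
        by (simp add: inv_letter_def reduce_cancel_mid[of "C s j (md s j)" _ "word_inv (C s j (md s j))", simplified] reduce_cancel_inv)
    next
      case True
      let ?s' = "addv s (ph (Inl j, True))"
      have "gam ?s' (Inl j, False) = C ?s' j (md ?s' j) @ word_inv (C ?s' j (Suc (md ?s' j)))"
        by simp
      also have "\<dots> = C s j (md (sub1 s j) j) @ word_inv (C s j (md s j))"
        by (simp only: addv_True C_sub1 Csuc_sub1[OF j])
      finally have "gam ?s' (Inl j, False) = C s j (md (sub1 s j) j) @ word_inv (C s j (md s j))" .
      then show ?thesis using x Inl True
        by (simp add: inv_letter_def reduce_cancel_mid[of "C s j (md s j)" _ "word_inv (C s j (md s j))", simplified] reduce_cancel_inv)
    qed
  next
    case (Inr l)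
    then show ?thesis using x by (simp add: inv_letter_def reduce_Cons)
  qed
qed

end



context pres begin

declare ph.simps[simp del]

lemma reduce_mid: "reduce (u @ reduce v @ w) = reduce (u @ v @ w)"
  by (metis reduce_append_left reduce_append_right)
lemma reduce_tail2: "reduce (a @ b @ reduce v) = reduce (a @ b @ v)"
  using reduce_append_right[of "a @ b" v] by simp
lemma reduce_tail3: "reduce (a @ b @ c @ reduce v) = reduce (a @ b @ c @ v)"
  using reduce_append_right[of "a @ b @ c" v] by simp

lemma T_cons_red: "fst a \<in> gens k n \<Longrightarrow> reduce (T s (cons_red a v)) = reduce (T s (a # v))"
proof (cases v)
  case (Cons b w)
  assume g: "fst a \<in> gens k n"
  show ?thesis
  proof (cases "b = inv_letter a")
    case True
    have "T s (a # v) = (gam s a @ gam (addv s (ph a)) (inv_letter a)) @ T s w"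
      using Cons True by (simp add: ph_inv')
    then have "reduce (T s (a # v)) = reduce (T s w)"
      using reduce_Nil_prefix[OF gam_cancel[OF g, of s], of "T s w"] by simp
    then show ?thesis using Cons True by simp
  qed (use Cons in simp)
qed simp

lemma T_reduce: "okw w \<Longrightarrow> reduce (T s (reduce w)) = reduce (T s w)"
proof (induction w arbitrary: s)
  case (Cons a w)
  have g: "fst a \<in> gens k n" and w: "okw w" using Cons.prems by auto
  have "reduce (T s (reduce (a # w))) = reduce (T s (a # reduce w))"
    by (simp add: reduce_Cons T_cons_red[OF g])
  also have "\<dots> = reduce (gam s a @ reduce (T (addv s (ph a)) (reduce w)))"
    by (simp add: reduce_append_right)
  also have "\<dots> = reduce (gam s a @ reduce (T (addv s (ph a)) w))"
    using Cons.IH[OF w] by simp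
  also have "\<dots> = reduce (T s (a # w))"
    by (simp add: reduce_append_right)
  finally show ?case .
qed simp

lemma T_word_inv: "okw w \<Longrightarrow> reduce (T (addv s (ex w)) (word_inv w)) = reduce (word_inv (T s w))"
proof -
  assume w: "okw w"
  have "reduce (T s (w @ word_inv w)) = reduce (T s (reduce (w @ word_inv w)))"
    using T_reduce[of "w @ word_inv w" s] w by simp
  also have "\<dots> = []" by (simp add: reduce_cancel_inv)
  finally have "reduce (T s w @ T (addv s (ex w)) (word_inv w)) = []" by (simp add: T_append)
  then show ?thesis by (rule reduce_inv_unique)
qed

definition shiftv :: "(nat \<Rightarrow> int) \<Rightarrow> nat \<Rightarrow> int \<Rightarrow> nat \<Rightarrow> int" where
  "shiftv s j c = (\<lambda>i. if i = j then s i + c else s i)"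

lemma T_rep_F: "j \<in> {1..k} \<Longrightarrow>
  reduce (T s (replicate c (Inl j, False))) = reduce (C s j (md s j) @ word_inv (C s j (md (shiftv s j (int c)) j)))"
proof (induction c arbitrary: s)
  case 0
  have "shiftv s j 0 = s" by (simp add: shiftv_def fun_eq_iff)
  then show ?case by (simp add: reduce_cancel_inv)
next
  case (Suc c)
  let ?s' = "addv s (ph (Inl j, False))"
  have sh: "shiftv ?s' j (int c) = shiftv s j (int (Suc c))"
    by (simp add: shiftv_def addv_def fun_eq_iff ph.simps)
  have "reduce (T s (replicate (Suc c) (Inl j, False)))
      = reduce (gam s (Inl j, False) @ reduce (T ?s' (replicate c (Inl j, False))))"
    by (simp add: reduce_mid reduce_tail2 reduce_tail3)
  also have "\<dots> = reduce (gam s (Inl j, False) @ C ?s' j (md ?s' j) @ word_inv (C ?s' j (md (shiftv ?s' j (int c)) j)))"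
    using Suc by (simp add: reduce_mid reduce_tail2 reduce_tail3)
  also have "\<dots> = reduce ((C s j (md s j) @ word_inv (C s j (Suc (md s j)))) @ C s j (Suc (md s j)) @ word_inv (C s j (md (shiftv s j (int (Suc c))) j)))"
    by (simp only: gam.simps C_addv sh Csuc[OF Suc.prems, of s, symmetric])
  also have "\<dots> = reduce (C s j (md s j) @ word_inv (C s j (md (shiftv s j (int (Suc c))) j)))"
    using reduce_cancel_mid[of "C s j (md s j)" "C s j (Suc (md s j))"] by simp
  finally show ?case .
qed

lemma T_rep_T: "j \<in> {1..k} \<Longrightarrow>
  reduce (T s (replicate c (Inl j, True))) = reduce (C s j (md s j) @ word_inv (C s j (md (shiftv s j (- int c)) j)))"
proof (induction c arbitrary: s)
  case 0
  have "shiftv s j 0 = s" by (simp add: shiftv_def fun_eq_iff)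
  then show ?case by (simp add: reduce_cancel_inv)
next
  case (Suc c)
  let ?s' = "addv s (ph (Inl j, True))"
  have sh: "shiftv (sub1 s j) j (- int c) = shiftv s j (- int (Suc c))"
    by (simp add: shiftv_def sub1_def fun_eq_iff)
  have s': "?s' = sub1 s j" by (rule addv_True)
  have "reduce (T s (replicate (Suc c) (Inl j, True)))
      = reduce (gam s (Inl j, True) @ reduce (T ?s' (replicate c (Inl j, True))))"
    by (simp add: reduce_mid reduce_tail2 reduce_tail3)
  also have "\<dots> = reduce (gam s (Inl j, True) @ C ?s' j (md ?s' j) @ word_inv (C ?s' j (md (shiftv ?s' j (- int c)) j)))"
    using Suc by (simp add: reduce_mid reduce_tail2 reduce_tail3)
  also have "\<dots> = reduce ((C s j (md s j) @ word_inv (C s j (md (sub1 s j) j))) @ C s j (md (sub1 s j) j) @ word_inv (C s j (md (shiftv s j (- int (Suc c))) j)))"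
    by (simp only: gam.simps s' C_sub1 sh)
  also have "\<dots> = reduce (C s j (md s j) @ word_inv (C s j (md (shiftv s j (- int (Suc c))) j)))"
    using reduce_cancel_mid[of "C s j (md s j)" "C s j (md (sub1 s j) j)"] by simp
  finally show ?case .
qed

lemma T_relator: "j \<in> {1..k} \<Longrightarrow> reduce (T s (replicate (m j) (Inl j, False))) = []"
proof -
  assume j: "j \<in> {1..k}"
  have "md (shiftv s j (int (m j))) j = md s j"
    by (simp add: md_def shiftv_def)
  then show ?thesis using T_rep_F[OF j, of s "m j"] by (simp add: reduce_cancel_inv)
qed

lemma ex_rep: "ex (replicate c (Inl j, b)) = (\<lambda>i. if i = j then (if b then - int c else int c) else 0)"
  by (induction c) (auto simp: zv_def addv_def ph.simps fun_eq_iff)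

lemma okw_H: "h \<in> H \<Longrightarrow> okw h" using H_sub by (auto simp: carrier_FG)

definition good :: "((nat + nat) \<times> bool) list \<Rightarrow> bool" where
  "good r \<longleftrightarrow> okw r \<and> (\<forall>s. reduce (T s r) = []) \<and> eqm (ex r) zv"

lemma reduce_word_inv_Nil: "reduce X = [] \<Longrightarrow> reduce (word_inv X) = []"
  by (metis reduce_append_right reduce_inv_cancel append_Nil2)

lemma good_inv: "good r \<Longrightarrow> good (word_inv r)"
proof -
  assume g: "good r"
  have "reduce (T s (word_inv r)) = []" for s
  proof -
    let ?s0 = "\<lambda>i. s i - ex r i"
    have "addv ?s0 (ex r) = s" by (simp add: addv_def fun_eq_iff)
    then have "reduce (T s (word_inv r)) = reduce (word_inv (T ?s0 r))"
      using T_word_inv[of r ?s0] g by (simp add: good_def)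
    moreover have "reduce (T ?s0 r) = []" using g by (simp add: good_def)
    ultimately show ?thesis using reduce_word_inv_Nil by simp
  qed
  moreover have "eqm (ex (word_inv r)) zv"
    using g unfolding good_def eqm_def zv_def ex_word_inv by (simp add: zmod_zminus1_eq_if)
  ultimately show ?thesis using g by (simp add: good_def)
qed

lemma good_mult: "good a \<Longrightarrow> good b \<Longrightarrow> good (reduce (a @ b))"
proof -
  assume a: "good a" and b: "good b"
  have "reduce (T s (reduce (a @ b))) = []" for s
  proof -
    have "reduce (T s (reduce (a @ b))) = reduce (T s a @ T (addv s (ex a)) b)"
      using T_reduce[of "a @ b" s] a b by (simp add: good_def T_append)
    also have "\<dots> = reduce (reduce (T s a) @ reduce (T (addv s (ex a)) b))"
      by (rule reduce_append)
    finally show ?thesis using a b by (simp add: good_def)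
  qed
  moreover have "eqm (ex (reduce (a @ b))) zv"
    using eqm_addv[of "ex a" zv "ex b" zv] a b by (simp add: good_def ex_reduce ex_append)
  ultimately show ?thesis using a b okw_reduce by (simp add: good_def)
qed

lemma good_gen: assumes g: "g \<in> carrier FG" and r: "r \<in> relators k m"
  shows "good (reduce (g @ r @ word_inv g))"
proof -
  obtain j where j: "j \<in> {1..k}" and rj: "r = replicate (m j) (Inl j, False)"
    using r by (auto simp: relators_def)
  have og: "okw g" using g by (simp add: carrier_FG)
  have orr: "okw r" using rj j by simp
  have er: "eqm (ex r) zv" unfolding rj ex_rep eqm_def zv_def by simp
  have "reduce (T s (reduce (g @ r @ word_inv g))) = []" for s
  proof -
    let ?s1 = "addv s (ex g)"
    have "reduce (T s (reduce (g @ r @ word_inv g))) = reduce (T s (g @ r @ word_inv g))"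
      using T_reduce og orr by simp
    also have "\<dots> = reduce (T s g @ T ?s1 r @ T (addv ?s1 (ex r)) (word_inv g))"
      by (simp add: T_append)
    also have "T (addv ?s1 (ex r)) (word_inv g) = T ?s1 (word_inv g)"
      using T_eqm[OF eqm_addv[OF eqm_refl er]] by simp
    also have "reduce (T s g @ T ?s1 r @ T ?s1 (word_inv g))
        = reduce (T s g @ reduce (T ?s1 r) @ reduce (T ?s1 (word_inv g)))"
      by (simp add: reduce_mid reduce_tail2)
    also have "\<dots> = reduce (T s g @ word_inv (T s g))"
      using T_relator[OF j, of ?s1] T_word_inv[OF og, of s] rj by (simp add: reduce_append_right)
    also have "\<dots> = []" by (rule reduce_cancel_inv)
    finally show ?thesis .
  qed
  moreover have "eqm (ex (reduce (g @ r @ word_inv g))) zv"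
  proof -
    have "ex (reduce (g @ r @ word_inv g)) = ex r"
      by (simp add: ex_reduce ex_append ex_word_inv addv_def fun_eq_iff)
    then show ?thesis using er by simp
  qed
  ultimately show ?thesis using og orr okw_reduce[of "g @ r @ word_inv g"] by (simp add: good_def)
qed

lemma H_good: "h \<in> H \<Longrightarrow> good h"
  unfolding rel_closure_def
proof (induction rule: generate.induct)
  case one
  then show ?case by (simp add: good_def one_free_grp)
next
  case (incl h)
  then show ?case using good_gen by blast
next
  case (inv h)
  then obtain g r where h: "h = reduce (g @ r @ word_inv g)" "g \<in> carrier FG" "r \<in> relators k m" by blast
  then have "good h" using good_gen by simp
  moreover have "h \<in> carrier FG" using \<open>good h\<close> by (simp add: good_def carrier_FG h(1))
  ultimately show ?case using good_inv by (simp add: inv_free_grp)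
next
  case (eng h1 h2)
  then show ?case using good_mult by (simp add: mult_free_grp)
qed

definition rep :: "((nat + nat) \<times> bool) list set \<Rightarrow> ((nat + nat) \<times> bool) list" where
  "rep c = (SOME w. w \<in> c)"

definition psi :: "((nat + nat) \<times> bool) list set \<Rightarrow> (((nat + nat) \<times> bool) list set \<times> bool) list" where
  "psi c = reduce (T zv (rep c))"

definition Phi :: "((nat + nat) \<times> bool) list set \<Rightarrow> nat \<Rightarrow> int" where
  "Phi c = (\<lambda>i. ex (rep c) i mod int (m i))"

lemma pi_elem: "w' \<in> pi w \<Longrightarrow> \<exists>h\<in>H. w' = reduce (h @ reduce w)"
  unfolding pi_def r_coset_def by (auto simp: mult_free_grp)

lemma pi_self: "okw w \<Longrightarrow> reduce w \<in> pi w"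
  unfolding pi_def using FG.rcos_self[OF reduce_carrier H.subgroup_axioms] by simp

lemma rep_pi: "okw w \<Longrightarrow> \<exists>h\<in>H. rep (pi w) = reduce (h @ reduce w)"
proof -
  assume w: "okw w"
  have "rep (pi w) \<in> pi w" unfolding rep_def using pi_self[OF w] by (rule someI)
  then show ?thesis by (rule pi_elem)
qed

lemma psi_pi: "okw w \<Longrightarrow> psi (pi w) = reduce (T zv w)"
proof -
  assume w: "okw w"
  obtain h where h: "h \<in> H" "rep (pi w) = reduce (h @ reduce w)" using rep_pi[OF w] by blast
  have g: "good h" using H_good[OF h(1)] .
  have "psi (pi w) = reduce (T zv (reduce (h @ reduce w)))" unfolding psi_def h(2) ..
  also have "\<dots> = reduce (T zv h @ T (ex h) (reduce w))"
    using T_reduce[of "h @ reduce w" zv] g w okw_reduce[OF w] by (simp add: good_def T_append)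
  also have "\<dots> = reduce (reduce (T zv h) @ T (ex h) (reduce w))"
    by (simp add: reduce_append_left)
  also have "\<dots> = reduce (T zv (reduce w))"
    using g T_eqm[of "ex h" zv "reduce w"] by (simp add: good_def)
  also have "\<dots> = reduce (T zv w)" using T_reduce[OF w] .
  finally show ?thesis .
qed

lemma Phi_pi: "okw w \<Longrightarrow> Phi (pi w) = (\<lambda>i. ex w i mod int (m i))"
proof -
  assume w: "okw w"
  obtain h where h: "h \<in> H" "rep (pi w) = reduce (h @ reduce w)" using rep_pi[OF w] by blast
  have g: "eqm (ex h) zv" using H_good[OF h(1)] by (simp add: good_def)
  have "ex (rep (pi w)) = addv (ex h) (ex w)" unfolding h(2) by (simp add: ex_reduce ex_append)
  then show ?thesis using g unfolding Phi_def eqm_def zv_def addv_def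
    by (auto simp: fun_eq_iff mod_add_left_eq[symmetric])
qed

(* Schreier identity *)

definition Pd :: "(nat \<Rightarrow> int) \<Rightarrow> nat \<Rightarrow> ((nat + nat) \<times> bool) list set" where
  "Pd s j = dprod G (\<lambda>i. e i [^]\<^bsub>G\<^esub> U s i) (Suc j) k"
definition Qd :: "(nat \<Rightarrow> int) \<Rightarrow> nat \<Rightarrow> ((nat + nat) \<times> bool) list set" where
  "Qd s j = dprod G (\<lambda>i. e i [^]\<^bsub>G\<^esub> U s i) 1 (j - 1)"

lemma U_pow: "i \<in> {1..k} \<Longrightarrow> e i [^]\<^bsub>G\<^esub> U s i = e i [^]\<^bsub>G\<^esub> md s i"
  unfolding U_def using e_pow_m by simp

lemma Pd_carrier[simp]: "Pd s j \<in> carrier G"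
  unfolding Pd_def by (rule G.dprod_carrier) auto
lemma Qd_carrier[simp]: "j \<le> Suc k \<Longrightarrow> Qd s j \<in> carrier G"
  unfolding Qd_def by (rule G.dprod_carrier) auto
lemma tG_carrier[simp]: "tG s \<in> carrier G"
  unfolding tG_def by (rule G.dprod_carrier) auto

lemma tG_split: "j \<in> {1..k} \<Longrightarrow> tG s = Pd s j \<otimes>\<^bsub>G\<^esub> e j [^]\<^bsub>G\<^esub> md s j \<otimes>\<^bsub>G\<^esub> Qd s j"
  unfolding tG_def Pd_def Qd_def
  by (subst G.dprod_split[of 1 j k]) (use U_pow in auto)

lemma elem_PQ: "elem s j a = conj G (Pd s j) (comm G (e j [^]\<^bsub>G\<^esub> a) (Qd s j))"
  unfolding elem_def Pd_def Qd_def ..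

lemma PQ_indep: assumes "\<And>i. i \<noteq> j \<Longrightarrow> md s i = md s' i"
  shows "Pd s j = Pd s' j" "Qd s j = Qd s' j"
proof -
  have u: "i \<noteq> j \<Longrightarrow> U s i = U s' i" for i using assms by (simp add: U_def)
  show "Pd s j = Pd s' j" unfolding Pd_def by (rule G.dprod_cong) (simp add: u)
  show "Qd s j = Qd s' j" unfolding Qd_def by (rule G.dprod_cong) (simp add: u)
qed

lemma PQ_addv: "Pd (addv s (ph (Inl j, b))) j = Pd s j" "Qd (addv s (ph (Inl j, b))) j = Qd s j"
  using PQ_indep[of j "addv s (ph (Inl j, b))" s] md_addv_other by auto

lemma md_succ: "j \<in> {1..k} \<Longrightarrow> md (addv s (ph (Inl j, False))) j = Suc (md s j) mod m j"
proof -
  assume j: "j \<in> {1..k}"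
  have mp: "int (m j) > 0" using m_pos[OF j] by simp
  have "md (addv s (ph (Inl j, False))) j = nat ((s j + 1) mod int (m j))"
    by (simp add: md_def addv_def ph.simps)
  also have "(s j + 1) mod int (m j) = (s j mod int (m j) + 1) mod int (m j)"
    by (simp add: mod_add_left_eq)
  also have "s j mod int (m j) = int (md s j)" unfolding md_def using mp by simp
  also have "(int (md s j) + 1) mod int (m j) = int (Suc (md s j) mod m j)" by (simp add: zmod_int add.commute)
  finally show ?thesis by simp
qed

lemma conj_comm_one: "P \<in> carrier G \<Longrightarrow> Q \<in> carrier G \<Longrightarrow> conj G P (comm G \<one>\<^bsub>G\<^esub> Q) = \<one>\<^bsub>G\<^esub>"
  unfolding conj_def comm_def by simp

lemma epsC: assumes j: "j \<in> {1..k}" and c: "cnd s j" and b: "b \<le> m j"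
  shows "G.eps (C s j b) = conj G (Pd s j) (comm G (e j [^]\<^bsub>G\<^esub> b) (Qd s j))"
proof -
  have ej: "e j \<in> carrier G" using e_carrier j by simp
  have q: "Qd s j \<in> carrier G" using j by simp
  show ?thesis
  proof (cases "1 \<le> b \<and> b < m j")
    case True
    have "conj G (Pd s j) (comm G (e j [^]\<^bsub>G\<^esub> b) (Qd s j)) \<in> carrier G"
      unfolding conj_def comm_def using ej q by simp
    then show ?thesis using True c unfolding C_def elem_PQ by simp
  next
    case False
    then have "b = 0 \<or> b = m j" using b by auto
    then have "e j [^]\<^bsub>G\<^esub> b = \<one>\<^bsub>G\<^esub>" using e_pow_m j by auto
    moreover have "C s j b = []" using False unfolding C_def by auto
    ultimately show ?thesis using q by (simp add: conj_comm_one)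
  qed
qed

lemma Qd_one: assumes j: "j \<in> {1..k}" and c: "\<not> cnd s j" shows "Qd s j = \<one>\<^bsub>G\<^esub>"
  unfolding Qd_def
proof (rule G.dprod_one)
  fix i assume i: "1 \<le> i" "i \<le> j - 1"
  then have "md s i = 0" using c j unfolding cnd_def by auto
  moreover have "i \<in> {1..k}" using i j by auto
  ultimately show "e i [^]\<^bsub>G\<^esub> U s i = \<one>\<^bsub>G\<^esub>" using i j e_pow_m by (simp add: U_def)
qed

lemma elem_carrier: "j \<in> {1..k} \<Longrightarrow> elem s j a \<in> carrier G"
  unfolding elem_PQ conj_def comm_def using e_carrier by simp

lemma okl_C: "j \<in> {1..k} \<Longrightarrow> G.okl (C s j a)"
  unfolding C_def using elem_carrier by simp

lemma hh_conj_carrier: "l \<in> {1..2*n} \<Longrightarrow> conj G (tG s) (hh l) \<in> carrier G"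
  unfolding conj_def using h_carrier by simp

lemma okl_gam: "fst x \<in> gens k n \<Longrightarrow> G.okl (gam s x)"
proof -
  assume g: "fst x \<in> gens k n"
  obtain y b where x: "x = (y, b)" by (cases x)
  show ?thesis
  proof (cases y)
    case (Inl j)
    then show ?thesis using x g okl_C by (cases b) auto
  next
    case (Inr l)
    then show ?thesis using x g hh_conj_carrier by simp
  qed
qed

lemma okl_T: "okw w \<Longrightarrow> G.okl (T s w)"
  by (induction w arbitrary: s) (auto simp: okl_gam)

lemma schreier_F: assumes j: "j \<in> {1..k}"
  shows "tG s \<otimes>\<^bsub>G\<^esub> e j = G.eps (gam s (Inl j, False)) \<otimes>\<^bsub>G\<^esub> tG (addv s (ph (Inl j, False)))"
proof -
  let ?a = "md s j" and ?s' = "addv s (ph (Inl j, False))"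
  have ej: "e j \<in> carrier G" using e_carrier j by simp
  have q: "Qd s j \<in> carrier G" using j by simp
  have a: "?a < m j" using md_lt[OF j] .
  have t': "tG ?s' = Pd s j \<otimes>\<^bsub>G\<^esub> e j [^]\<^bsub>G\<^esub> Suc ?a \<otimes>\<^bsub>G\<^esub> Qd s j"
    using tG_split[OF j, of ?s'] PQ_addv md_succ[OF j] e_pow_mod[OF j, of "Suc ?a"] by simp
  show ?thesis
  proof (cases "cnd s j")
    case True
    have "G.eps (gam s (Inl j, False)) = G.eps (C s j ?a) \<otimes>\<^bsub>G\<^esub> inv\<^bsub>G\<^esub> G.eps (C s j (Suc ?a))"
      using okl_C[OF j] by (simp add: G.eps_append G.eps_word_inv)
    also have "\<dots> = conj G (Pd s j) (comm G (e j [^]\<^bsub>G\<^esub> ?a) (Qd s j))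
        \<otimes>\<^bsub>G\<^esub> inv\<^bsub>G\<^esub> conj G (Pd s j) (comm G (e j [^]\<^bsub>G\<^esub> Suc ?a) (Qd s j))"
      using epsC[OF j True] a by simp
    finally show ?thesis
      using tG_split[OF j, of s] t' G.schreier_id[OF Pd_carrier ej q, of s j ?a]
      by (simp add: G.m_assoc)
  next
    case False
    have "G.eps (gam s (Inl j, False)) = \<one>\<^bsub>G\<^esub>" using False by (simp add: C_def)
    moreover have "Qd s j = \<one>\<^bsub>G\<^esub>" using Qd_one[OF j False] .
    ultimately show ?thesis
      using tG_split[OF j, of s] t' ej by (simp add: G.m_assoc)
  qed
qed

lemma schreier_T: assumes j: "j \<in> {1..k}"
  shows "tG s \<otimes>\<^bsub>G\<^esub> inv\<^bsub>G\<^esub> e j = G.eps (gam s (Inl j, True)) \<otimes>\<^bsub>G\<^esub> tG (addv s (ph (Inl j, True)))"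
proof -
  let ?s' = "sub1 s j"
  have ej: "e j \<in> carrier G" using e_carrier j by simp
  have F: "tG ?s' \<otimes>\<^bsub>G\<^esub> e j = G.eps (gam ?s' (Inl j, False)) \<otimes>\<^bsub>G\<^esub> tG s"
    using schreier_F[OF j, of ?s'] by (simp only: addv_sub1)
  have g1: "gam ?s' (Inl j, False) = C s j (md ?s' j) @ word_inv (C s j (md s j))"
    by (simp only: gam.simps C_sub1 Csuc_sub1[OF j])
  have g2: "gam s (Inl j, True) = C s j (md s j) @ word_inv (C s j (md ?s' j))" by simp
  let ?A = "G.eps (C s j (md s j))" and ?B = "G.eps (C s j (md ?s' j))"
  have A: "?A \<in> carrier G" and B: "?B \<in> carrier G" using okl_C[OF j] by auto
  have e1: "G.eps (gam ?s' (Inl j, False)) = ?B \<otimes>\<^bsub>G\<^esub> inv\<^bsub>G\<^esub> ?A"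
    unfolding g1 using okl_C[OF j] by (simp add: G.eps_append G.eps_word_inv)
  have e2: "G.eps (gam s (Inl j, True)) = ?A \<otimes>\<^bsub>G\<^esub> inv\<^bsub>G\<^esub> ?B"
    unfolding g2 using okl_C[OF j] by (simp add: G.eps_append G.eps_word_inv)
  have Y: "?B \<otimes>\<^bsub>G\<^esub> inv\<^bsub>G\<^esub> ?A \<in> carrier G" using A B by simp
  have "tG s = inv\<^bsub>G\<^esub> (?B \<otimes>\<^bsub>G\<^esub> inv\<^bsub>G\<^esub> ?A) \<otimes>\<^bsub>G\<^esub> ((?B \<otimes>\<^bsub>G\<^esub> inv\<^bsub>G\<^esub> ?A) \<otimes>\<^bsub>G\<^esub> tG s)"
    using G.inv_cancel_l[OF Y tG_carrier] by simp
  also have "(?B \<otimes>\<^bsub>G\<^esub> inv\<^bsub>G\<^esub> ?A) \<otimes>\<^bsub>G\<^esub> tG s = tG ?s' \<otimes>\<^bsub>G\<^esub> e j"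
    using F e1 by simp
  finally have "tG s = inv\<^bsub>G\<^esub> (?B \<otimes>\<^bsub>G\<^esub> inv\<^bsub>G\<^esub> ?A) \<otimes>\<^bsub>G\<^esub> (tG ?s' \<otimes>\<^bsub>G\<^esub> e j)" .
  then have "tG s \<otimes>\<^bsub>G\<^esub> inv\<^bsub>G\<^esub> e j = ?A \<otimes>\<^bsub>G\<^esub> inv\<^bsub>G\<^esub> ?B \<otimes>\<^bsub>G\<^esub> tG ?s'"
    using A B ej by (simp add: G.m_assoc G.inv_mult_group)
  then show ?thesis using e2 by (simp add: addv_True)
qed

lemma pi_inv_letter: "fst x \<in> gens k n \<Longrightarrow> pi [inv_letter x] = inv\<^bsub>G\<^esub> pi [x]"
  using pi_inv[of "[x]"] by simp

lemma schreier_letter: assumes g: "fst x \<in> gens k n"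
  shows "tG s \<otimes>\<^bsub>G\<^esub> pi [x] = G.eps (gam s x) \<otimes>\<^bsub>G\<^esub> tG (addv s (ph x))"
proof -
  obtain y b where x: "x = (y, b)" by (cases x)
  show ?thesis
  proof (cases y)
    case (Inl j)
    then have j: "j \<in> {1..k}" using g x by simp
    show ?thesis
    proof (cases b)
      case False then show ?thesis using x Inl schreier_F[OF j] by (simp add: e_pi)
    next
      case True
      have "pi [(Inl j, True)] = inv\<^bsub>G\<^esub> e j"
        using pi_inv_letter[of "(Inl j, False)"] j by (simp add: e_pi inv_letter_def)
      then show ?thesis using x Inl True schreier_T[OF j] by simp
    qed
  next
    case (Inr l)
    then have l: "l \<in> {1..2*n}" using g x by simp
    have hc: "hh l \<in> carrier G" using h_carrier[OF l] .
    have ph: "addv s (ph x) = s" using x Inr by (simp add: ph.simps)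
    show ?thesis
    proof (cases b)
      case False
      then show ?thesis using x Inr ph hc hh_conj_carrier[OF l, of s]
        by (simp add: h_pi[symmetric] conj_def G.m_assoc)
    next
      case True
      have "pi [(Inr l, True)] = inv\<^bsub>G\<^esub> hh l"
        using pi_inv_letter[of "(Inr l, False)"] l by (simp add: h_pi inv_letter_def)
      then show ?thesis using x Inr True ph hc hh_conj_carrier[OF l, of s]
        by (simp add: conj_def G.m_assoc G.inv_mult_group)
    qed
  qed
qed

lemma schreier_word: "okw w \<Longrightarrow> tG s \<otimes>\<^bsub>G\<^esub> pi w = G.eps (T s w) \<otimes>\<^bsub>G\<^esub> tG (addv s (ex w))"
proof (induction w arbitrary: s)
  case Nil
  then show ?case by (simp add: pi_Nil)
next
  case (Cons x w)
  have g: "fst x \<in> gens k n" and w: "okw w" using Cons.prems by auto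
  have "pi (x # w) = pi [x] \<otimes>\<^bsub>G\<^esub> pi w" using pi_mult[of "[x]" w] g w by simp
  then have "tG s \<otimes>\<^bsub>G\<^esub> pi (x # w) = (tG s \<otimes>\<^bsub>G\<^esub> pi [x]) \<otimes>\<^bsub>G\<^esub> pi w"
    using g w pi_carrier by (simp add: G.m_assoc)
  also have "\<dots> = G.eps (gam s x) \<otimes>\<^bsub>G\<^esub> (tG (addv s (ph x)) \<otimes>\<^bsub>G\<^esub> pi w)"
    using schreier_letter[OF g] okl_gam[OF g] w pi_carrier by (simp add: G.m_assoc)
  also have "\<dots> = G.eps (gam s x) \<otimes>\<^bsub>G\<^esub> (G.eps (T (addv s (ph x)) w) \<otimes>\<^bsub>G\<^esub> tG (addv (addv s (ph x)) (ex w)))"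
    using Cons.IH[OF w] by simp
  also have "\<dots> = G.eps (T s (x # w)) \<otimes>\<^bsub>G\<^esub> tG (addv s (ex (x # w)))"
    using okl_gam[OF g] okl_T[OF w] by (simp add: G.eps_append G.m_assoc addv_assoc)
  finally show ?case .
qed

lemma tG_zv: "tG zv = \<one>\<^bsub>G\<^esub>"
  unfolding tG_def
proof (rule G.dprod_one)
  fix i assume "1 \<le> i" "i \<le> k"
  then show "e i [^]\<^bsub>G\<^esub> U zv i = \<one>\<^bsub>G\<^esub>" using e_pow_m by (simp add: U_def md_def zv_def)
qed

lemma tG_eqm: "eqm s s' \<Longrightarrow> tG s = tG s'" using tG_md md_eqm by blast

lemma decomp: "okw w \<Longrightarrow> pi w = G.eps (T zv w) \<otimes>\<^bsub>G\<^esub> tG (ex w)"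
  using schreier_word[of w zv] pi_carrier by (simp add: tG_zv)

end



context pres begin

lemma cnd_addv: "cnd (addv s (ph (Inl j, b))) j = cnd s j"
  unfolding cnd_def using md_addv_other[of _ j s b] by auto

lemma T_rep_zero: "\<not> cnd s j \<Longrightarrow> T s (replicate c (Inl j, b)) = []"
proof (induction c arbitrary: s)
  case (Suc c)
  have g: "gam s (Inl j, b) = []" using Suc.prems by (cases b) (simp_all add: C_def)
  show ?case using Suc.IH[of "addv s (ph (Inl j, b))"] Suc.prems g by (simp add: cnd_addv)
qed simp

lemma ex_dpw: "1 \<le> lo \<Longrightarrow> ex (dpw u lo hi) i = (if lo \<le> i \<and> i \<le> hi then int (u i) else 0)"
proof (induction hi)
  case 0 then show ?case by (simp add: dpw_def zv_def)
next
  case (Suc h)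
  show ?case
  proof (cases "lo \<le> Suc h")
    case True
    have "dpw u lo (Suc h) = replicate (u (Suc h)) (Inl (Suc h), False) @ dpw u lo h"
      using True by (simp add: dpw_def)
    then show ?thesis using Suc True by (auto simp: ex_append addv_def ex_rep)
  next
    case False
    then have "dpw u lo (Suc h) = []" by (simp add: dpw_def)
    then show ?thesis using False by (simp add: zv_def)
  qed
qed

lemma T_dpw_zero: "1 \<le> lo \<Longrightarrow> (\<And>i. 1 \<le> i \<Longrightarrow> i < hi \<Longrightarrow> md s i = 0) \<Longrightarrow> T s (dpw u lo hi) = []"
proof (induction hi arbitrary: s)
  case 0 then show ?case by (simp add: dpw_def)
next
  case (Suc h)
  show ?case
  proof (cases "lo \<le> Suc h")
    case True
    let ?r = "replicate (u (Suc h)) (Inl (Suc h), False)"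
    have d: "dpw u lo (Suc h) = ?r @ dpw u lo h" using True by (simp add: dpw_def)
    have nc: "\<not> cnd s (Suc h)" unfolding cnd_def using Suc.prems by auto
    have "md (addv s (ex ?r)) i = md s i" if "i \<noteq> Suc h" for i
      using that by (simp add: md_def addv_def ex_rep)
    then have "T (addv s (ex ?r)) (dpw u lo h) = []"
      using Suc.prems by (intro Suc.IH) auto
    then show ?thesis using d T_rep_zero[OF nc] by (simp add: T_append)
  next
    case False
    then show ?thesis by (simp add: dpw_def)
  qed
qed

lemma T_conj: assumes p: "okw p" and q: "okw q" and eq: "eqm (ex q) zv"
  shows "reduce (T s (p @ q @ word_inv p)) = reduce (T s p @ T (addv s (ex p)) q @ word_inv (T s p))"
proof -
  have "T s (p @ q @ word_inv p) = T s p @ T (addv s (ex p)) q @ T (addv (addv s (ex p)) (ex q)) (word_inv p)"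
    by (simp add: T_append addv_assoc)
  also have "T (addv (addv s (ex p)) (ex q)) (word_inv p) = T (addv s (ex p)) (word_inv p)"
    using T_eqm[OF eqm_addv[OF eqm_refl eq]] by simp
  finally have "reduce (T s (p @ q @ word_inv p)) = reduce (T s p @ T (addv s (ex p)) q @ reduce (T (addv s (ex p)) (word_inv p)))"
    by (simp add: reduce_tail2)
  also have "\<dots> = reduce (T s p @ T (addv s (ex p)) q @ word_inv (T s p))"
    using T_word_inv[OF p, of s] by (simp add: reduce_tail2)
  finally show ?thesis .
qed

lemma reduce_word_inv: "reduce (word_inv X) = word_inv (reduce X)"
proof -
  have "reduce (word_inv X) = reduce (word_inv X @ reduce (reduce X @ word_inv (reduce X)))"
    by (simp add: reduce_cancel_inv)
  also have "\<dots> = reduce (word_inv X @ X @ word_inv (reduce X))"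
    by (simp add: reduce_append_right reduce_mid)
  also have "\<dots> = reduce (word_inv (reduce X))"
    using reduce_cancel_mid[of "[]" X "word_inv (reduce X)"] by simp
  also have "\<dots> = word_inv (reduce X)"
    by (simp add: reduce_reduced reduced_word_inv)
  finally show ?thesis .
qed

lemma word_inv_replicate: "word_inv (replicate c (x, False)) = replicate c (x, True)"
  by (simp add: word_inv_def inv_letter_def)

lemma pi_conj: "okw p \<Longrightarrow> okw q \<Longrightarrow> pi (p @ q @ word_inv p) = conj G (pi p) (pi q)"
  using pi_carrier by (simp add: pi_mult pi_inv conj_def G.m_assoc)

lemma pi_comm: "okw p \<Longrightarrow> okw q \<Longrightarrow> pi (p @ q @ word_inv p @ word_inv q) = comm G (pi p) (pi q)"
  using pi_carrier by (simp add: pi_mult pi_inv comm_def G.m_assoc)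

lemma U_val: "i \<in> {1..k} \<Longrightarrow> s i = int c \<Longrightarrow> c \<in> {1..m i} \<Longrightarrow> U s i = c"
proof -
  assume i: "i \<in> {1..k}" and s: "s i = int c" and c: "c \<in> {1..m i}"
  show ?thesis
  proof (cases "c = m i")
    case True then show ?thesis using s by (simp add: U_def md_def)
  next
    case False
    then have "c < m i" using c by auto
    then have "md s i = c" using s by (simp add: md_def zmod_int)
    then show ?thesis using c by (simp add: U_def)
  qed
qed

lemma S1_elem: assumes b: "b \<in> S1 k n m"
  shows "\<exists>w. okw w \<and> b = pi w \<and> reduce (T zv w) = [(b, False)] \<and> ex w = zv"
proof -
  obtain t u where t: "2 \<le> t" "t \<le> k"
    and u1: "\<forall>i\<in>{1..<t}. u i \<in> {1..m i}" and u2: "\<exists>i\<in>{1..<t}. u i \<noteq> m i"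
    and u3: "u t \<in> {1..m t - 1}" and u4: "\<forall>i\<in>{t<..k}. u i \<in> {1..m i}"
    and bd: "b = conj G (dprod G (\<lambda>i. e i [^]\<^bsub>G\<^esub> u i) (Suc t) k)
             (comm G (e t [^]\<^bsub>G\<^esub> u t) (dprod G (\<lambda>i. e i [^]\<^bsub>G\<^esub> u i) 1 (t - 1)))"
    using b unfolding S1_def Let_def by blast
  have tk: "t \<in> {1..k}" using t by auto
  define Pw where "Pw = dpw u (Suc t) k"
  define Ew :: "((nat + nat) \<times> bool) list" where "Ew = replicate (u t) (Inl t, False)"
  define Qw where "Qw = dpw u 1 (t - 1)"
  define c where "c = Ew @ Qw @ word_inv Ew @ word_inv Qw"
  define w where "w = Pw @ c @ word_inv Pw"
  have oP: "okw Pw" unfolding Pw_def by (rule okw_dpw) auto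
  have oE: "okw Ew" unfolding Ew_def using tk by simp
  have oQ: "okw Qw" unfolding Qw_def using t by (intro okw_dpw) auto
  have oc: "okw c" unfolding c_def using oE oQ by simp
  have ow: "okw w" unfolding w_def using oP oc by simp
  have pic: "pi c = comm G (e t [^]\<^bsub>G\<^esub> u t) (dprod G (\<lambda>i. e i [^]\<^bsub>G\<^esub> u i) 1 (t - 1))"
    unfolding c_def using pi_comm[OF oE oQ] t
    by (simp add: Qw_def pi_dpw Ew_def pi_replicate e_pi[symmetric])
  have pib: "pi w = b"
    unfolding w_def bd using pi_conj[OF oP oc] pic by (simp add: Pw_def pi_dpw)
  have utm: "u t < m t" using u3 m2 tk by auto
  have exc: "ex c = zv" unfolding c_def
    by (simp add: ex_append ex_word_inv addv_def zv_def fun_eq_iff)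
  have exw: "ex w = zv" unfolding w_def
    by (simp add: ex_append ex_word_inv exc addv_def zv_def fun_eq_iff)
  have TP: "T zv Pw = []" unfolding Pw_def by (rule T_dpw_zero) (auto simp: md_def zv_def)
  let ?s1 = "ex Pw"
  have exP: "ex Pw i = (if Suc t \<le> i \<and> i \<le> k then int (u i) else 0)" for i
    unfolding Pw_def by (rule ex_dpw) simp
  have exE: "ex Ew i = (if i = t then int (u t) else 0)" for i
    unfolding Ew_def by (simp add: ex_rep)
  have exQ: "ex Qw i = (if 1 \<le> i \<and> i \<le> t - 1 then int (u i) else 0)" for i
    unfolding Qw_def by (rule ex_dpw) simp
  have "reduce (T zv w) = reduce (T zv Pw @ T (addv zv (ex Pw)) c @ word_inv (T zv Pw))"
    unfolding w_def using T_conj[OF oP oc, of zv] exc by simp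
  also have "\<dots> = reduce (T ?s1 c)" using TP by simp
  finally have r1: "reduce (T zv w) = reduce (T ?s1 c)" .
  let ?s2 = "addv ?s1 (ex Ew)"
  let ?s3 = "addv ?s2 (ex Qw)"
  let ?s4 = "addv ?s3 (ex (word_inv Ew))"
  have Tc: "T ?s1 c = T ?s1 Ew @ T ?s2 Qw @ T ?s3 (word_inv Ew) @ T ?s4 (word_inv Qw)"
    unfolding c_def by (simp add: T_append ex_append addv_assoc)
  have nc1: "\<not> cnd ?s1 t" unfolding cnd_def md_def using exP by auto
  have T1: "T ?s1 Ew = []" unfolding Ew_def by (rule T_rep_zero[OF nc1])
  have T2: "T ?s2 Qw = []" unfolding Qw_def
    by (rule T_dpw_zero) (auto simp: md_def addv_def exP exE)
  have s3: "?s3 i = (if 1 \<le> i \<and> i \<le> k then int (u i) else 0)" for i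
    using t by (auto simp: addv_def exP exE exQ)
  have Us3: "U ?s3 i = u i" if "i \<in> {1..k}" for i
  proof (rule U_val[OF that])
    show "?s3 i = int (u i)" using that s3 by simp
    show "u i \<in> {1..m i}"
      using that u1 u3 u4 m2 by (cases "i < t"; cases "i = t") auto
  qed
  have mds3: "md ?s3 t = u t" using s3[of t] tk utm by (simp add: md_def zmod_int)
  have cnd3: "cnd ?s3 t"
  proof -
    obtain i where i: "i \<in> {1..<t}" "u i \<noteq> m i" using u2 by blast
    then have "u i \<in> {1..m i}" using u1 by blast
    then have "u i < m i" "1 \<le> u i" using i by auto
    moreover have "?s3 i = int (u i)" using s3[of i] i t by auto
    ultimately have "md ?s3 i \<noteq> 0" by (simp add: md_def zmod_int)
    then show ?thesis unfolding cnd_def using i by blast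
  qed
  have el: "elem ?s3 t (u t) = b"
    unfolding elem_def bd
  proof -
    have "dprod G (\<lambda>i. e i [^]\<^bsub>G\<^esub> U ?s3 i) (Suc t) k = dprod G (\<lambda>i. e i [^]\<^bsub>G\<^esub> u i) (Suc t) k"
      by (rule G.dprod_cong) (simp add: Us3)
    moreover have "dprod G (\<lambda>i. e i [^]\<^bsub>G\<^esub> U ?s3 i) 1 (t - 1) = dprod G (\<lambda>i. e i [^]\<^bsub>G\<^esub> u i) 1 (t - 1)"
      using t by (intro G.dprod_cong) (simp add: Us3)
    ultimately show "conj G (dprod G (\<lambda>i. e i [^]\<^bsub>G\<^esub> U ?s3 i) (Suc t) k)
        (comm G (e t [^]\<^bsub>G\<^esub> u t) (dprod G (\<lambda>i. e i [^]\<^bsub>G\<^esub> U ?s3 i) 1 (t - 1))) =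
      conj G (dprod G (\<lambda>i. e i [^]\<^bsub>G\<^esub> u i) (Suc t) k)
        (comm G (e t [^]\<^bsub>G\<^esub> u t) (dprod G (\<lambda>i. e i [^]\<^bsub>G\<^esub> u i) 1 (t - 1)))" by simp
  qed
  have md0: "md (shiftv ?s3 t (- int (u t))) t = 0"
    using s3[of t] tk by (simp add: md_def shiftv_def)
  have T3: "reduce (T ?s3 (word_inv Ew)) = [(b, False)]"
  proof -
    have "reduce (T ?s3 (word_inv Ew)) = reduce (C ?s3 t (md ?s3 t) @ word_inv (C ?s3 t (md (shiftv ?s3 t (- int (u t))) t)))"
      unfolding Ew_def word_inv_replicate by (rule T_rep_T[OF tk])
    also have "\<dots> = [(b, False)]"
      using mds3 md0 cnd3 el u3 utm by (simp add: C_def reduce_Cons)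
    finally show ?thesis .
  qed
  have s4: "?s4 = addv ?s1 (ex Qw)"
    by (simp add: addv_def ex_word_inv fun_eq_iff)
  have T4: "reduce (T ?s4 (word_inv Qw)) = []"
  proof -
    have "T ?s1 Qw = []" unfolding Qw_def by (rule T_dpw_zero) (auto simp: md_def exP)
    then show ?thesis unfolding s4 using T_word_inv[OF oQ, of ?s1] by simp
  qed
  have "reduce (T zv w) = reduce (T ?s3 (word_inv Ew) @ T ?s4 (word_inv Qw))"
    using r1 Tc T1 T2 by simp
  also have "\<dots> = reduce (reduce (T ?s3 (word_inv Ew)) @ reduce (T ?s4 (word_inv Qw)))"
    by (rule reduce_append)
  also have "\<dots> = [(b, False)]" using T3 T4 by (simp add: reduce_Cons)
  finally show ?thesis using ow pib exw by blast
qed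

lemma S2_elem: assumes b: "b \<in> S2 k n m"
  shows "\<exists>w. okw w \<and> b = pi w \<and> reduce (T zv w) = [(b, False)] \<and> ex w = zv"
proof -
  obtain l u where l: "l \<in> {1..2*n}" and u: "\<forall>j\<in>{1..k}. u j \<in> {1..m j}"
    and bd: "b = conj G (dprod G (\<lambda>j. e j [^]\<^bsub>G\<^esub> (u j :: nat)) 1 k) (hh l)"
    using b unfolding S2_def Let_def by blast
  define Tw where "Tw = dpw u 1 k"
  define q :: "((nat + nat) \<times> bool) list" where "q = [(Inr l, False)]"
  define w where "w = Tw @ q @ word_inv Tw"
  have oT: "okw Tw" unfolding Tw_def by (rule okw_dpw) auto
  have oq: "okw q" unfolding q_def using l by simp
  have ow: "okw w" unfolding w_def using oT oq by simp
  have pib: "pi w = b" unfolding w_def bd using pi_conj[OF oT oq]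
    by (simp add: Tw_def pi_dpw q_def h_pi)
  have exq: "ex q = zv" unfolding q_def by (simp add: ph.simps)
  have exw: "ex w = zv" unfolding w_def
    by (simp add: ex_append ex_word_inv exq addv_def zv_def fun_eq_iff)
  have TT: "T zv Tw = []" unfolding Tw_def by (rule T_dpw_zero) (auto simp: md_def zv_def)
  have exT: "ex Tw i = (if 1 \<le> i \<and> i \<le> k then int (u i) else 0)" for i
    unfolding Tw_def by (rule ex_dpw) simp
  have tG: "tG (ex Tw) = dprod G (\<lambda>j. e j [^]\<^bsub>G\<^esub> u j) 1 k"
    unfolding tG_def by (rule G.dprod_cong) (use exT u in \<open>simp add: U_val\<close>)
  have "reduce (T zv w) = reduce (T zv Tw @ T (addv zv (ex Tw)) q @ word_inv (T zv Tw))"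
    unfolding w_def using T_conj[OF oT oq, of zv] exq by simp
  also have "\<dots> = [(b, False)]" using TT tG bd by (simp add: q_def reduce_Cons)
  finally show ?thesis using ow pib exw by blast
qed

lemma S_elem: "b \<in> S1 k n m \<union> S2 k n m \<Longrightarrow> \<exists>w. okw w \<and> b = pi w \<and> reduce (T zv w) = [(b, False)] \<and> ex w = zv"
  using S1_elem S2_elem by blast

lemma S_carrier: "S1 k n m \<union> S2 k n m \<subseteq> carrier G"
  using S_elem pi_carrier by blast

lemma elem_S1: assumes j: "j \<in> {1..k}" and a: "1 \<le> a" "a < m j" and c: "cnd s j"
  shows "elem s j a \<in> S1 k n m"
proof -
  obtain i where i: "i \<in> {1..<j}" "md s i \<noteq> 0" using c unfolding cnd_def by blast
  define u where "u = (\<lambda>i. if i = j then a else U s i)"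
  have Ur: "i \<in> {1..k} \<Longrightarrow> U s i \<in> {1..m i}" for i
    using md_lt[of i s] m_pos[of i] by (auto simp: U_def)
  have "elem s j a = conj G (dprod G (\<lambda>i. e i [^]\<^bsub>G\<^esub> u i) (Suc j) k)
             (comm G (e j [^]\<^bsub>G\<^esub> u j) (dprod G (\<lambda>i. e i [^]\<^bsub>G\<^esub> u i) 1 (j - 1)))"
  proof -
    have "dprod G (\<lambda>i. e i [^]\<^bsub>G\<^esub> u i) (Suc j) k = dprod G (\<lambda>i. e i [^]\<^bsub>G\<^esub> U s i) (Suc j) k"
      by (rule G.dprod_cong) (simp add: u_def)
    moreover have "dprod G (\<lambda>i. e i [^]\<^bsub>G\<^esub> u i) 1 (j - 1) = dprod G (\<lambda>i. e i [^]\<^bsub>G\<^esub> U s i) 1 (j - 1)"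
      by (rule G.dprod_cong) (use j in \<open>auto simp: u_def\<close>)
    moreover have "u j = a" by (simp add: u_def)
    ultimately show ?thesis unfolding elem_def by simp
  qed
  moreover have "2 \<le> j \<and> j \<le> k" using i j by auto
  moreover have "\<forall>i\<in>{1..<j}. u i \<in> {1..m i}" using Ur j by (auto simp: u_def)
  moreover have "\<exists>i\<in>{1..<j}. u i \<noteq> m i"
    using i md_lt[of i s] j by (intro bexI[of _ i]) (auto simp: u_def U_def)
  moreover have "u j \<in> {1..m j - 1}" using a by (auto simp: u_def)
  moreover have "\<forall>i\<in>{j<..k}. u i \<in> {1..m i}" using Ur by (auto simp: u_def)
  ultimately show ?thesis unfolding S1_def Let_def by blast
qed

lemma conj_S2: "l \<in> {1..2*n} \<Longrightarrow> conj G (tG s) (hh l) \<in> S2 k n m"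
proof -
  assume l: "l \<in> {1..2*n}"
  have Ur: "\<forall>j\<in>{1..k}. U s j \<in> {1..m j}"
  proof
    fix j assume j: "j \<in> {1..k}"
    have "md s j < m j" "0 < m j" using md_lt[OF j] m_pos[OF j] by auto
    then show "U s j \<in> {1..m j}" by (auto simp: U_def)
  qed
  show ?thesis unfolding S2_def Let_def tG_def using l Ur by blast
qed

lemma fst_set_word_inv[simp]: "fst ` set (word_inv X) = fst ` set X"
  by (simp add: word_inv_def inv_letter_def image_image)

lemma letters_gam: "fst x \<in> gens k n \<Longrightarrow> fst ` set (gam s x) \<subseteq> S1 k n m \<union> S2 k n m"
proof -
  assume g: "fst x \<in> gens k n"
  obtain y b where x: "x = (y, b)" by (cases x)
  have CS: "j \<in> {1..k} \<Longrightarrow> fst ` set (C s j a) \<subseteq> S1 k n m \<union> S2 k n m" for j a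
    unfolding C_def using elem_S1 by auto
  show ?thesis
  proof (cases y)
    case (Inl j)
    then have "j \<in> {1..k}" using g x by simp
    then show ?thesis using x Inl CS by (cases b) (simp_all add: image_Un)
  next
    case (Inr l)
    then show ?thesis using x g conj_S2 by auto
  qed
qed

lemma letters_T: "okw w \<Longrightarrow> fst ` set (T s w) \<subseteq> S1 k n m \<union> S2 k n m"
proof (induction w arbitrary: s)
  case (Cons x w)
  then have "fst x \<in> gens k n" "okw w" by auto
  then show ?case using letters_gam[of x s] Cons.IH[of "addv s (ph x)"] by (simp add: image_Un)
qed simp

(* The subgroup F *)

abbreviation "BB \<equiv> S1 k n m \<union> S2 k n m"
abbreviation "FF \<equiv> generate G (carrier G \<inter> BB)"
abbreviation "Fg \<equiv> subgroup_generated G BB"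
abbreviation "FB \<equiv> free_grp BB"

lemma carrier_Fg: "carrier Fg = FF" by (rule carrier_subgroup_generated)

lemma FF_sub: "FF \<subseteq> carrier G" using G.generate_incl[of "carrier G \<inter> BB"] by blast

lemma FF_subgroup: "subgroup FF G" by (rule G.generate_is_subgroup) auto

lemma F_rep: "c \<in> FF \<Longrightarrow> \<exists>w. okw w \<and> c = pi w \<and> eqm (ex w) zv"
proof (induction rule: generate.induct)
  case one
  then show ?case using pi_Nil by (intro exI[of _ "[]"]) simp
next
  case (incl h)
  then obtain w where "okw w" "h = pi w" "ex w = zv" using S_elem by blast
  then show ?case by auto
next
  case (inv h)
  then obtain w where w: "okw w" "h = pi w" "ex w = zv" using S_elem by blast
  then have "inv\<^bsub>G\<^esub> h = pi (word_inv w)" using pi_inv by simp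
  moreover have "ex (word_inv w) = zv" using w by (simp add: ex_word_inv zv_def)
  ultimately show ?case using w by (intro exI[of _ "word_inv w"]) simp
next
  case (eng h1 h2)
  then obtain w1 w2 where "okw w1" "h1 = pi w1" "eqm (ex w1) zv" "okw w2" "h2 = pi w2" "eqm (ex w2) zv"
    by blast
  then show ?case using eqm_addv[of "ex w1" zv "ex w2" zv]
    by (intro exI[of _ "w1 @ w2"]) (simp add: pi_mult ex_append)
qed

lemma eps_in_F: "fst ` set x \<subseteq> BB \<Longrightarrow> G.eps x \<in> FF"
proof (induction x)
  case Nil then show ?case by (simp add: generate.one)
next
  case (Cons y x)
  have y: "fst y \<in> carrier G \<inter> BB" using Cons.prems S_carrier by auto
  have "(if snd y then inv\<^bsub>G\<^esub> fst y else fst y) \<in> FF"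
    using y by (auto intro: generate.incl generate.inv)
  then show ?case using Cons by (simp add: G.eps_Cons generate.eng)
qed

lemma F_eps: assumes w: "okw w" "eqm (ex w) zv" shows "pi w = G.eps (reduce (T zv w))"
  using decomp[OF w(1)] tG_eqm[OF w(2)] tG_zv okl_T[OF w(1)] G.eps_reduce by simp

lemma psi_carrier: "c \<in> FF \<Longrightarrow> psi c \<in> carrier FB"
proof -
  assume c: "c \<in> FF"
  obtain w where w: "okw w" "c = pi w" "eqm (ex w) zv" using F_rep[OF c] by blast
  have "set (map fst (reduce (T zv w))) \<subseteq> BB"
    using set_reduce[of "T zv w"] letters_T[OF w(1), of zv] by auto
  then show ?thesis using w psi_pi by (simp add: carrier_free_grp)
qed

lemma psi_mult: "c1 \<in> FF \<Longrightarrow> c2 \<in> FF \<Longrightarrow> psi (c1 \<otimes>\<^bsub>G\<^esub> c2) = reduce (psi c1 @ psi c2)"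
proof -
  assume c1: "c1 \<in> FF" and c2: "c2 \<in> FF"
  obtain w1 where w1: "okw w1" "c1 = pi w1" "eqm (ex w1) zv" using F_rep[OF c1] by blast
  obtain w2 where w2: "okw w2" "c2 = pi w2" "eqm (ex w2) zv" using F_rep[OF c2] by blast
  have "psi (c1 \<otimes>\<^bsub>G\<^esub> c2) = reduce (T zv (w1 @ w2))" using w1 w2 by (simp add: pi_mult[symmetric] psi_pi)
  also have "\<dots> = reduce (T zv w1 @ T zv w2)"
    using T_eqm[OF w1(3), of w2] by (simp add: T_append)
  also have "\<dots> = reduce (reduce (T zv w1) @ reduce (T zv w2))" by (rule reduce_append)
  also have "\<dots> = reduce (psi c1 @ psi c2)"
    using w1 w2 by (simp add: psi_pi)
  finally show ?thesis .
qed

lemma eps_psi: "c \<in> FF \<Longrightarrow> G.eps (psi c) = c"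
proof -
  assume c: "c \<in> FF"
  obtain w where w: "okw w" "c = pi w" "eqm (ex w) zv" using F_rep[OF c] by blast
  have "psi c = reduce (T zv w)" using w(1,2) psi_pi by simp
  then show ?thesis using F_eps[OF w(1,3)] w(2) by simp
qed

lemma psi_gen: "b \<in> BB \<Longrightarrow> psi b = [(b, False)] \<and> psi (inv\<^bsub>G\<^esub> b) = [(b, True)]"
proof -
  assume b: "b \<in> BB"
  obtain w where w: "okw w" "b = pi w" "reduce (T zv w) = [(b, False)]" "ex w = zv" using S_elem[OF b] by blast
  have "inv\<^bsub>G\<^esub> b = pi (word_inv w)" using w(1,2) pi_inv by simp
  then have "psi (inv\<^bsub>G\<^esub> b) = reduce (T zv (word_inv w))" using w(1) psi_pi by simp
  also have "\<dots> = reduce (word_inv (T zv w))" using T_word_inv[OF w(1), of zv] w(4) by simp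
  also have "\<dots> = [(b, True)]" using w(3) by (simp add: reduce_word_inv inv_letter_def)
  finally show ?thesis using w psi_pi by simp
qed

lemma psi_eps: "x \<in> carrier FB \<Longrightarrow> psi (G.eps x) = x"
proof (induction x)
  case Nil
  then show ?case using psi_pi[of "[]"] pi_Nil by simp
next
  case (Cons y x)
  have y: "fst y \<in> BB" and x: "x \<in> carrier FB" and r: "reduced (y # x)"
    using Cons.prems by (auto simp: carrier_free_grp dest: reduced_Cons)
  have yc: "fst y \<in> carrier G" using y S_carrier by auto
  let ?g = "if snd y then inv\<^bsub>G\<^esub> fst y else fst y"
  have gF: "?g \<in> FF" using y yc by (auto intro: generate.incl generate.inv)
  have xF: "G.eps x \<in> FF" using x by (intro eps_in_F) (auto simp: carrier_free_grp)
  have pg: "psi ?g = [y]" using psi_gen[OF y] by (cases y) auto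
  have "psi (G.eps (y # x)) = psi (?g \<otimes>\<^bsub>G\<^esub> G.eps x)" by (simp add: G.eps_Cons)
  also have "\<dots> = reduce ([y] @ x)" using psi_mult[OF gF xF] pg Cons.IH[OF x] by simp
  also have "\<dots> = y # x" using r by (simp add: reduce_reduced)
  finally show ?case .
qed

lemma psi_iso: "psi \<in> iso Fg FB"
proof -
  have hom: "psi \<in> hom Fg FB"
    unfolding hom_def using psi_carrier psi_mult by (auto simp: carrier_Fg mult_free_grp)
  have inj: "inj_on psi FF"
    by (rule inj_onI) (metis eps_psi)
  have surj: "psi ` FF = carrier FB"
  proof
    show "psi ` FF \<subseteq> carrier FB" using psi_carrier by auto
    show "carrier FB \<subseteq> psi ` FF"
    proof
      fix x assume x: "x \<in> carrier FB"
      have "G.eps x \<in> FF" using x by (intro eps_in_F) (auto simp: carrier_free_grp)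
      then show "x \<in> psi ` FF" using psi_eps[OF x] by (metis image_eqI)
    qed
  qed
  show ?thesis unfolding iso_def bij_betw_def using hom inj surj by (simp add: carrier_Fg)
qed

lemma Fg_free: "is_free_grp Fg"
  unfolding is_free_grp_def using psi_iso is_isoI by blast

(* The index *)

definition VV :: "(nat \<Rightarrow> int) set" where
  "VV = PiE {1..k} (\<lambda>i. {0..<int (m i)})"

lemma card_VV: "card VV = (\<Prod>i=1..k. m i)"
  unfolding VV_def by (simp add: card_PiE)

lemma tG_cong: "(\<And>i. i \<in> {1..k} \<Longrightarrow> md s i = md s' i) \<Longrightarrow> tG s = tG s'"
  unfolding tG_def by (rule G.dprod_cong) (simp add: U_def)

lemma rcos_absorb: "f \<in> FF \<Longrightarrow> t \<in> carrier G \<Longrightarrow> FF #>\<^bsub>G\<^esub> (f \<otimes>\<^bsub>G\<^esub> t) = FF #>\<^bsub>G\<^esub> t"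
proof -
  assume f: "f \<in> FF" and t: "t \<in> carrier G"
  have fc: "f \<in> carrier G" using f FF_sub by auto
  have "FF #>\<^bsub>G\<^esub> (f \<otimes>\<^bsub>G\<^esub> t) = (FF #>\<^bsub>G\<^esub> f) #>\<^bsub>G\<^esub> t"
    using G.coset_mult_assoc[OF FF_sub fc t] by simp
  also have "FF #>\<^bsub>G\<^esub> f = FF" using subgroup.rcos_const[OF FF_subgroup G.is_group f] .
  finally show ?thesis .
qed

lemma rcosets_eq: "rcosets\<^bsub>G\<^esub> FF = (\<lambda>v. FF #>\<^bsub>G\<^esub> tG v) ` VV"
proof
  show "rcosets\<^bsub>G\<^esub> FF \<subseteq> (\<lambda>v. FF #>\<^bsub>G\<^esub> tG v) ` VV"
  proof
    fix X assume "X \<in> rcosets\<^bsub>G\<^esub> FF"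
    then obtain c where c: "c \<in> carrier G" "X = FF #>\<^bsub>G\<^esub> c" unfolding RCOSETS_def by blast
    obtain w where w: "okw w" "reduced w" "c = pi w" using pi_surj[OF c(1)] by blast
    have d: "c = G.eps (T zv w) \<otimes>\<^bsub>G\<^esub> tG (ex w)" using decomp[OF w(1)] w(3) by simp
    have f: "G.eps (T zv w) \<in> FF" using letters_T[OF w(1)] by (intro eps_in_F) auto
    define v where "v = restrict (\<lambda>i. ex w i mod int (m i)) {1..k}"
    have v: "v \<in> VV" unfolding VV_def v_def using m_pos by auto
    have "tG (ex w) = tG v" by (rule tG_cong) (simp add: v_def md_def)
    then have "X = FF #>\<^bsub>G\<^esub> tG v" using c d rcos_absorb[OF f tG_carrier] by simp
    then show "X \<in> (\<lambda>v. FF #>\<^bsub>G\<^esub> tG v) ` VV" using v by blast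
  qed
  show "(\<lambda>v. FF #>\<^bsub>G\<^esub> tG v) ` VV \<subseteq> rcosets\<^bsub>G\<^esub> FF"
    using G.rcosetsI[OF FF_sub tG_carrier] by auto
qed

lemma tG_pi: "tG v = pi (dpw (U v) 1 k)"
  unfolding tG_def by (simp add: pi_dpw)

lemma U_mod: "i \<in> {1..k} \<Longrightarrow> int (U v i) mod int (m i) = v i mod int (m i)"
proof -
  assume i: "i \<in> {1..k}"
  have mp: "int (m i) > 0" using m_pos[OF i] by simp
  show ?thesis
  proof (cases "md v i = 0")
    case True
    have "0 \<le> v i mod int (m i)" using mp by simp
    then have "v i mod int (m i) = 0" using True unfolding md_def by simp
    then show ?thesis using True by (simp add: U_def)
  next
    case False
    have "int (md v i) = v i mod int (m i)" unfolding md_def using mp by simp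
    then show ?thesis using False by (simp add: U_def)
  qed
qed

lemma inj_VV: "inj_on (\<lambda>v. FF #>\<^bsub>G\<^esub> tG v) VV"
proof (rule inj_onI)
  fix v v' assume v: "v \<in> VV" and v': "v' \<in> VV" and eq: "FF #>\<^bsub>G\<^esub> tG v = FF #>\<^bsub>G\<^esub> tG v'"
  have "tG v \<in> FF #>\<^bsub>G\<^esub> tG v" by (rule G.rcos_self[OF tG_carrier FF_subgroup])
  then have "tG v \<in> FF #>\<^bsub>G\<^esub> tG v'" using eq by simp
  then have inF: "tG v \<otimes>\<^bsub>G\<^esub> inv\<^bsub>G\<^esub> tG v' \<in> FF"
    using subgroup.rcos_module_imp[OF FF_subgroup G.is_group tG_carrier] by blast
  define w0 where "w0 = dpw (U v) 1 k @ word_inv (dpw (U v') 1 k)"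
  have o0: "okw w0" unfolding w0_def by (simp add: okw_dpw)
  have p0: "pi w0 = tG v \<otimes>\<^bsub>G\<^esub> inv\<^bsub>G\<^esub> tG v'"
    unfolding w0_def tG_pi by (simp add: pi_mult pi_inv okw_dpw)
  obtain w where w: "okw w" "tG v \<otimes>\<^bsub>G\<^esub> inv\<^bsub>G\<^esub> tG v' = pi w" "eqm (ex w) zv"
    using F_rep[OF inF] by blast
  have "Phi (pi w) = Phi (pi w0)" using w(2) p0 by simp
  then have "(\<lambda>i. ex w i mod int (m i)) = (\<lambda>i. ex w0 i mod int (m i))"
    using Phi_pi[OF w(1)] Phi_pi[OF o0] by simp
  then have z: "ex w0 i mod int (m i) = 0" for i
  proof -
    assume "(\<lambda>i. ex w i mod int (m i)) = (\<lambda>i. ex w0 i mod int (m i))"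
    then have "ex w i mod int (m i) = ex w0 i mod int (m i)" by (rule fun_cong)
    moreover have "ex w i mod int (m i) = 0" using w(3) unfolding eqm_def zv_def by simp
    ultimately show ?thesis by simp
  qed
  show "v = v'"
  proof (rule PiE_ext[OF v[unfolded VV_def] v'[unfolded VV_def]])
    fix i assume i: "i \<in> {1..k}"
    have "ex w0 i = int (U v i) - int (U v' i)"
      unfolding w0_def using i by (simp add: ex_append ex_word_inv addv_def ex_dpw)
    then have "(int (U v i) - int (U v' i)) mod int (m i) = 0" using z[of i] by simp
    then have "int (U v i) mod int (m i) = int (U v' i) mod int (m i)"
      by (simp add: mod_eq_dvd_iff mod_eq_0_iff_dvd)
    then have "v i mod int (m i) = v' i mod int (m i)" using U_mod[OF i] by simp
    moreover have "v i \<in> {0..<int (m i)}" "v' i \<in> {0..<int (m i)}"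
      using v v' i unfolding VV_def by auto
    ultimately show "v i = v' i" by simp
  qed
qed

lemma index: "card (rcosets\<^bsub>G\<^esub> FF) = (\<Prod>i=1..k. m i)"
  unfolding rcosets_eq using card_image[OF inj_VV] card_VV by simp

end

theorem corollary3p16:
  fixes n k :: nat and m :: "nat \<Rightarrow> nat"
  assumes "k \<ge> 1"
    and "\<forall>i\<in>{1..k}. m i \<ge> 2"
    and "\<not> cyclic_group (pres_grp k n m)"
    and "\<not> (pres_grp k n m \<cong> pres_grp 2 0 (\<lambda>_. 2))"
  shows "is_free_grp (subgroup_generated (pres_grp k n m) (S1 k n m \<union> S2 k n m))
    \<and> card (rcosets\<^bsub>pres_grp k n m\<^esub> (carrier (subgroup_generated (pres_grp k n m) (S1 k n m \<union> S2 k n m))))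
        = (\<Prod>i=1..k. m i)"
proof -
  interpret pres k n m using assms(2) by unfold_locales
  show ?thesis using Fg_free index by (simp add: carrier_Fg)
qed

end
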